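(* Let $T\subset\mathbb{R}^k$ be definable and let $f:U\subset T\times(0,1)^m\to\mathbb{R}$ be prepared in $x$ with associated bounded monomial map $b$, where for every $t\in T$ the fiber $U_t$ is open. Then there exist $A,B>0$ such that for every $t\in T$ the map $f_t=f(t,\cdot):U_t\to\mathbb{R}$ is weakly $(A,B,0)$-mild. Moreover, if the $C^1$-norm of the associated bounded monomial map $b_t=b(t,\cdot)$ is bounded independently of $t$, then there exist $A,B>0$ such that for every $\beta\in\mathbb{N}^m$ with $|\beta|\le1$ and every $t\in T$ the map $f_t^{(\beta)}$ is weakly $(A,B,0)$-mild.
   Context: Definability is in an o-minimal structure $\mathbb{R}^K_{\mathcal F}$ (ordered real field expanded by restricted functions from a Weierstrass system $\mathcal F$ and power functions $x\mapsto x^s$, $s$ in a subfield $K$ of the field of exponents of $\mathcal F$; e.g. power-subanalytic sets). A bounded definable $f:U\to\mathbb{R}$, $U\subset\mathbb{R}^k\times(0,1)^m$ with points $(t,x)$, is prepared in $x$ if $f(t,x)=b_j(t,x)F(b(t,x))$ where $b=(b_1,\dots,b_N):U\to\mathbb{R}^N$ is bounded, $b_j$ is a component of $b$, each $b_i(t,x)=a_i(t)\prod_{l=1}^m x_l^{\mu_{i,l}}$ with $a_i$ definable depending only on $t$ and $\mu_i\in K^m$, and $F$ is analytic and non-vanishing on an open neighbourhood of the closure of $b(U)$; $b$ is the associated bounded monomial map. For $W\subset(0,1)^d$ open, $A,B>0$, $C\ge0$: $g:W\to\mathbb{R}$ is weakly $(A,B,C)$-mild if it is $C^\infty$ and $|g^{(\nu)}(x)|\le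 B^{C+1}A^{|\nu|}|\nu|!^{C+1}/x^\nu$ for all $x\in W$, $\nu\in\mathbb{N}^d$, where $x^\nu=\prod x_i^{\nu_i}$, $|\nu|=\sum\nu_i$, $g^{(\nu)}=\partial^{|\nu|}g/\partial x_1^{\nu_1}\cdots\partial x_d^{\nu_d}$. The $C^1$-norm of $h$ is $\sup_x\max(|h(x)|,\max_i|\partial h/\partial x_i(x)|)$ (maximum over components for vector-valued $h$). *)

theory Defs
  imports "HOL-Analysis.Analysis"
begin

definition pd :: "'d::finite \<Rightarrow> (real^'d \<Rightarrow> real) \<Rightarrow> real^'d \<Rightarrow> real" where
  "pd i g x = deriv (\<lambda>s. g (x + s *\<^sub>R axis i 1)) 0"

text \<open>Iterated partial derivative along a list of directions; the multi-index
  is nu l = count (mset is) l, and |nu| = length is.\<close>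
fun pdl :: "'d::finite list \<Rightarrow> (real^'d \<Rightarrow> real) \<Rightarrow> real^'d \<Rightarrow> real" where
  "pdl [] g = g"
| "pdl (i # is) g = pd i (pdl is g)"

definition smooth_on :: "(real^'d::finite) set \<Rightarrow> (real^'d \<Rightarrow> real) \<Rightarrow> bool" where
  "smooth_on W g \<longleftrightarrow> (\<forall>is. \<forall>x\<in>W. pdl is g differentiable (at x))"

definition weakly_mild ::
  "(real^'d::finite) set \<Rightarrow> real \<Rightarrow> real \<Rightarrow> real \<Rightarrow> (real^'d \<Rightarrow> real) \<Rightarrow> bool" where
  "weakly_mild W A B C g \<longleftrightarrow> smooth_on W g \<and>
     (\<forall>x\<in>W. \<forall>is. \<bar>pdl is g x\<bar> \<le>
        B powr (C + 1) * A ^ length is * (fact (length is)) powr (C + 1)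
        / (\<Prod>l\<in>UNIV. (x $ l) ^ count (mset is) l))"

definition real_analytic_on :: "(real^'n::finite) set \<Rightarrow> (real^'n \<Rightarrow> real) \<Rightarrow> bool" where
  "real_analytic_on V F \<longleftrightarrow> (\<forall>y\<in>V. \<exists>r>0. \<exists>c :: ('n \<Rightarrow> nat) \<Rightarrow> real.
     \<forall>z. (\<forall>i. \<bar>z $ i - y $ i\<bar> < r) \<longrightarrow>
       ((\<lambda>\<alpha>. c \<alpha> * (\<Prod>i\<in>UNIV. (z $ i - y $ i) ^ \<alpha> i)) has_sum F z) UNIV)"

definition unit_cube :: "(real^'m::finite) set" where
  "unit_cube = {x. \<forall>l. 0 < x $ l \<and> x $ l < 1}"

definition fiber :: "('a \<times> 'b) set \<Rightarrow> 'a \<Rightarrow> 'b set" where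
  "fiber U t = {x. (t, x) \<in> U}"

end

theory Submission
  imports Defs
begin

lemma pd_has_derivative:
  fixes g :: "real^'d::finite \<Rightarrow> real"
  assumes "(g has_derivative D) (at x)"
  shows "pd i g x = D (axis i 1)"
proof -
  have l: "linear D" using assms has_derivative_linear by blast
  have "((\<lambda>s. x + s *\<^sub>R axis i 1) has_derivative (\<lambda>h. h *\<^sub>R axis i 1)) (at (0::real))"
    by (auto intro!: derivative_eq_intros)
  moreover have "(g has_derivative D) (at ((\<lambda>s. x + s *\<^sub>R axis i 1) 0))" using assms by simp
  ultimately have "((g \<circ> (\<lambda>s. x + s *\<^sub>R axis i 1)) has_derivative (D \<circ> (\<lambda>h. h *\<^sub>R axis i 1))) (at 0)"
    by (rule diff_chain_at)
  moreover have "(D \<circ> (\<lambda>h. h *\<^sub>R axis i 1)) = (\<lambda>h. h * D (axis i 1))"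
    using l by (auto simp: linear_scale o_def)
  ultimately have "((\<lambda>s. g (x + s *\<^sub>R axis i 1)) has_derivative (\<lambda>h. h * D (axis i 1))) (at 0)"
    by (simp add: o_def)
  moreover have "(\<lambda>h. h * D (axis i 1)) = (*) (D (axis i 1))" by (auto simp: mult.commute)
  ultimately have "((\<lambda>s. g (x + s *\<^sub>R axis i 1)) has_field_derivative D (axis i 1)) (at 0)"
    by (simp add: has_field_derivative_def)
  then show ?thesis unfolding pd_def by (rule DERIV_imp_deriv)
qed

lemma pd_diff:
  fixes g :: "real^'d::finite \<Rightarrow> real"
  assumes "g differentiable (at x)"
  shows "((\<lambda>s. g (x + s *\<^sub>R axis i 1)) has_real_derivative pd i g x) (at 0)"
proof -
  obtain D where D: "(g has_derivative D) (at x)" using assms differentiable_def by blast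
  have l: "linear D" using D has_derivative_linear by blast
  have "((\<lambda>s. x + s *\<^sub>R axis i 1) has_derivative (\<lambda>h. h *\<^sub>R axis i 1)) (at (0::real))"
    by (auto intro!: derivative_eq_intros)
  moreover have "(g has_derivative D) (at ((\<lambda>s. x + s *\<^sub>R axis i 1) 0))" using D by simp
  ultimately have "((g \<circ> (\<lambda>s. x + s *\<^sub>R axis i 1)) has_derivative (D \<circ> (\<lambda>h. h *\<^sub>R axis i 1))) (at 0)"
    by (rule diff_chain_at)
  moreover have "(D \<circ> (\<lambda>h. h *\<^sub>R axis i 1)) = (\<lambda>h. h * D (axis i 1))"
    using l by (auto simp: linear_scale o_def)
  ultimately have "((\<lambda>s. g (x + s *\<^sub>R axis i 1)) has_derivative (\<lambda>h. h * D (axis i 1))) (at 0)"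
    by (simp add: o_def)
  moreover have "(\<lambda>h. h * D (axis i 1)) = (*) (D (axis i 1))" by (auto simp: mult.commute)
  ultimately show ?thesis using pd_has_derivative[OF D, of i]
    by (simp add: has_field_derivative_def)
qed

lemma pd_local:
  fixes g h :: "real^'d::finite \<Rightarrow> real"
  assumes "open S" "x \<in> S" "\<And>y. y \<in> S \<Longrightarrow> g y = h y"
  shows "pd i g x = pd i h x"
  unfolding pd_def
proof (rule deriv_cong_ev[OF _ refl])
  obtain e where e: "e > 0" "ball x e \<subseteq> S" using assms(1,2) open_contains_ball by blast
  have "\<forall>\<^sub>F s in nhds 0. x + s *\<^sub>R axis i (1::real) \<in> S"
    unfolding eventually_nhds_metric
  proof (intro exI[of _ e] conjI allI impI)
    fix s :: real assume "dist s 0 < e"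
    then have "dist x (x + s *\<^sub>R axis i 1) < e" by (simp add: dist_norm)
    then show "x + s *\<^sub>R axis i 1 \<in> S" using e by auto
  qed (use e in auto)
  then show "\<forall>\<^sub>F s in nhds 0. g (x + s *\<^sub>R axis i 1) = h (x + s *\<^sub>R axis i 1)"
    by eventually_elim (use assms in auto)
qed

lemma pdl_local:
  fixes g h :: "real^'d::finite \<Rightarrow> real"
  assumes "open S" "\<And>y. y \<in> S \<Longrightarrow> g y = h y" "x \<in> S"
  shows "pdl is g x = pdl is h x"
  using assms(3)
proof (induction "is" arbitrary: x)
  case Nil then show ?case using assms(2) by simp
next
  case (Cons i "is")
  have "pd i (pdl is g) x = pd i (pdl is h) x"
    by (rule pd_local[OF assms(1) Cons.prems]) (rule Cons.IH)
  then show ?case by simp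
qed

lemma smooth_local:
  fixes g h :: "real^'d::finite \<Rightarrow> real"
  assumes "open S" "\<And>y. y \<in> S \<Longrightarrow> g y = h y" "smooth_on S g"
  shows "smooth_on S h"
  unfolding smooth_on_def
proof (intro allI ballI)
  fix "is" x assume x: "x \<in> S"
  have "pdl is g differentiable (at x)" using assms(3) x by (auto simp: smooth_on_def)
  then obtain D where "(pdl is g has_derivative D) (at x)" by (auto simp: differentiable_def)
  then have "(pdl is h has_derivative D) (at x)"
    by (rule has_derivative_transform_within_open[OF _ assms(1) x]) (rule pdl_local[OF assms(1,2)])
  then show "pdl is h differentiable (at x)" by (auto simp: differentiable_def)
qed

lemma pd_add:
  fixes g h :: "real^'d::finite \<Rightarrow> real"
  assumes "g differentiable (at x)" "h differentiable (at x)"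
  shows "pd i (\<lambda>x. g x + h x) x = pd i g x + pd i h x"
  unfolding pd_def[of i "\<lambda>x. g x + h x"]
  by (rule DERIV_imp_deriv) (intro DERIV_add pd_diff[OF assms(1)] pd_diff[OF assms(2)])

lemma pd_mult:
  fixes g h :: "real^'d::finite \<Rightarrow> real"
  assumes "g differentiable (at x)" "h differentiable (at x)"
  shows "pd i (\<lambda>x. g x * h x) x = pd i g x * h x + g x * pd i h x"
proof -
  have "((\<lambda>s. g (x + s *\<^sub>R axis i 1) * h (x + s *\<^sub>R axis i 1)) has_real_derivative
      pd i g x * h (x + 0 *\<^sub>R axis i 1) + pd i h x * g (x + 0 *\<^sub>R axis i 1)) (at 0)"
    by (intro DERIV_mult pd_diff[OF assms(1)] pd_diff[OF assms(2)])
  then show ?thesis unfolding pd_def[of i "\<lambda>x. g x * h x"] 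
    by (subst DERIV_imp_deriv) (auto simp: pd_def algebra_simps)
qed

lemma pd_cmult:
  fixes g :: "real^'d::finite \<Rightarrow> real"
  assumes "g differentiable (at x)"
  shows "pd i (\<lambda>x. c * g x) x = c * pd i g x"
  unfolding pd_def[of i "\<lambda>x. c * g x"]
  by (rule DERIV_imp_deriv) (intro DERIV_cmult pd_diff[OF assms(1)])

lemma pd_const: "pd i (\<lambda>x. c) x = 0"
  unfolding pd_def by (rule DERIV_imp_deriv) simp

lemma pd_sum:
  fixes g :: "'a \<Rightarrow> real^'d::finite \<Rightarrow> real"
  assumes "\<And>k. k \<in> I \<Longrightarrow> g k differentiable (at x)"
  shows "pd i (\<lambda>x. \<Sum>k\<in>I. g k x) x = (\<Sum>k\<in>I. pd i (g k) x)"
proof -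
  have "((\<lambda>s. \<Sum>k\<in>I. g k (x + s *\<^sub>R axis i 1)) has_real_derivative (\<Sum>k\<in>I. pd i (g k) x)) (at 0)"
    by (rule DERIV_sum) (rule pd_diff[OF assms])
  then show ?thesis unfolding pd_def[of i "\<lambda>x. \<Sum>k\<in>I. g k x"] by (rule DERIV_imp_deriv)
qed

lemma diff_local:
  fixes f g :: "real^'d::finite \<Rightarrow> real"
  assumes "open S" "x \<in> S" "f differentiable (at x)" "\<And>y. y \<in> S \<Longrightarrow> f y = g y"
  shows "g differentiable (at x)"
proof -
  obtain D where "(f has_derivative D) (at x)" using assms(3) by (auto simp: differentiable_def)
  then have "(g has_derivative D) (at x)"
    by (rule has_derivative_transform_within_open[OF _ assms(1,2)]) (rule assms(4))
  then show ?thesis by (auto simp: differentiable_def)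
qed

lemma smooth_diff: "smooth_on S g \<Longrightarrow> x \<in> S \<Longrightarrow> pdl is g differentiable (at x)"
  by (auto simp: smooth_on_def)

lemma pdl_sum:
  fixes g :: "'a \<Rightarrow> real^'d::finite \<Rightarrow> real"
  assumes "open S" "\<And>k. k \<in> I \<Longrightarrow> smooth_on S (g k)"
  shows "\<forall>x\<in>S. pdl is (\<lambda>x. \<Sum>k\<in>I. g k x) x = (\<Sum>k\<in>I. pdl is (g k) x)"
proof (induction "is")
  case Nil then show ?case by simp
next
  case (Cons i "is")
  show ?case
  proof
    fix x assume x: "x \<in> S"
    have "pdl (i # is) (\<lambda>x. \<Sum>k\<in>I. g k x) x = pd i (\<lambda>x. \<Sum>k\<in>I. pdl is (g k) x) x"
      using pd_local[OF assms(1) x, of "pdl is (\<lambda>x. \<Sum>k\<in>I. g k x)"] Cons.IH by simp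
    also have "\<dots> = (\<Sum>k\<in>I. pd i (pdl is (g k)) x)"
      by (rule pd_sum) (use smooth_diff[OF assms(2) x] in auto)
    finally show "pdl (i # is) (\<lambda>x. \<Sum>k\<in>I. g k x) x = (\<Sum>k\<in>I. pdl (i # is) (g k) x)" by simp
  qed
qed

lemma smooth_sum:
  fixes g :: "'a \<Rightarrow> real^'d::finite \<Rightarrow> real"
  assumes "open S" "\<And>k. k \<in> I \<Longrightarrow> smooth_on S (g k)" "finite I"
  shows "smooth_on S (\<lambda>x. \<Sum>k\<in>I. g k x)"
  unfolding smooth_on_def
proof (intro allI ballI)
  fix "is" x assume x: "x \<in> S"
  have "(\<lambda>x. \<Sum>k\<in>I. pdl is (g k) x) differentiable (at x)"
    by (intro differentiable_sum assms(3)) (use smooth_diff[OF assms(2) x] in auto)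
  then show "pdl is (\<lambda>x. \<Sum>k\<in>I. g k x) differentiable (at x)"
    by (rule diff_local[OF assms(1) x]) (simp add: pdl_sum[OF assms(1,2)])
qed

lemma pdl_cmult:
  fixes g :: "real^'d::finite \<Rightarrow> real"
  assumes "open S" "smooth_on S g"
  shows "\<forall>x\<in>S. pdl is (\<lambda>x. c * g x) x = c * pdl is g x"
proof (induction "is")
  case Nil then show ?case by simp
next
  case (Cons i "is")
  show ?case
  proof
    fix x assume x: "x \<in> S"
    have "pdl (i # is) (\<lambda>x. c * g x) x = pd i (\<lambda>x. c * pdl is g x) x"
      using pd_local[OF assms(1) x, of "pdl is (\<lambda>x. c * g x)"] Cons.IH by simp
    also have "\<dots> = c * pd i (pdl is g) x"
      by (rule pd_cmult) (use smooth_diff[OF assms(2) x] in auto)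
    finally show "pdl (i # is) (\<lambda>x. c * g x) x = c * pdl (i # is) g x" by simp
  qed
qed

lemma smooth_cmult:
  fixes g :: "real^'d::finite \<Rightarrow> real"
  assumes "open S" "smooth_on S g"
  shows "smooth_on S (\<lambda>x. c * g x)"
  unfolding smooth_on_def
proof (intro allI ballI)
  fix "is" x assume x: "x \<in> S"
  have "(\<lambda>x. c * pdl is g x) differentiable (at x)"
    by (intro differentiable_mult differentiable_const) (use smooth_diff[OF assms(2) x] in auto)
  then show "pdl is (\<lambda>x. c * g x) differentiable (at x)"
    by (rule diff_local[OF assms(1) x]) (simp add: pdl_cmult[OF assms])
qed

lemma pdl_const: "pdl is (\<lambda>x. c) x = (if is = [] then c else 0)"
proof (cases "is")
  case (Cons i js)
  have "pdl js (\<lambda>x. c) = (\<lambda>x. if js = [] then c else 0)"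
  proof (induction js)
    case (Cons k ks) then show ?case by (simp add: pd_const)
  qed simp
  then show ?thesis using Cons by (simp add: pd_const)
qed simp

lemma smooth_const: "smooth_on S (\<lambda>x. c)"
  unfolding smooth_on_def
proof (intro allI ballI)
  fix "is" x
  have "pdl is (\<lambda>x. c) = (\<lambda>x. if is = [] then c else 0)" using pdl_const by blast
  then show "pdl is (\<lambda>x. c) differentiable (at x)" by simp
qed

fun sel :: "bool list \<Rightarrow> 'a list \<Rightarrow> 'a list" where
  "sel (b # bs) (i # is) = (if b then i # sel bs is else sel bs is)"
| "sel _ _ = []"

definition BL :: "nat \<Rightarrow> bool list set" where "BL n = {bs. length bs = n}"

lemma finite_BL: "finite (BL n)"
proof -
  have "BL n = {xs. set xs \<subseteq> (UNIV::bool set) \<and> length xs = n}" by (auto simp: BL_def)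
  then show ?thesis using finite_lists_length_eq[of "UNIV::bool set" n] by simp
qed

lemma BL_Suc: "BL (Suc n) = Cons True ` BL n \<union> Cons False ` BL n"
  by (auto simp: BL_def length_Suc_conv image_iff)

lemma sum_BL_Suc: "(\<Sum>bs\<in>BL (Suc n). \<phi> bs) = (\<Sum>bs\<in>BL n. \<phi> (True # bs) + \<phi> (False # bs))"
proof -
  have "(\<Sum>bs\<in>BL (Suc n). \<phi> bs) = (\<Sum>bs\<in>Cons True ` BL n. \<phi> bs) + (\<Sum>bs\<in>Cons False ` BL n. \<phi> bs)"
    unfolding BL_Suc by (rule sum.union_disjoint) (auto simp: finite_BL)
  also have "\<dots> = (\<Sum>bs\<in>BL n. \<phi> (True # bs)) + (\<Sum>bs\<in>BL n. \<phi> (False # bs))"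
    by (simp add: sum.reindex)
  finally show ?thesis by (simp add: sum.distrib)
qed

lemma leibniz:
  fixes g h :: "real^'d::finite \<Rightarrow> real"
  assumes "open S" "smooth_on S g" "smooth_on S h"
  shows "\<forall>x\<in>S. pdl is (\<lambda>x. g x * h x) x =
     (\<Sum>bs\<in>BL (length is). pdl (sel bs is) g x * pdl (sel (map Not bs) is) h x)"
proof (induction "is")
  case Nil then show ?case by (simp add: BL_def)
next
  case (Cons i "is")
  show ?case
  proof
    fix x assume x: "x \<in> S"
    have "pdl (i # is) (\<lambda>x. g x * h x) x =
       pd i (\<lambda>x. \<Sum>bs\<in>BL (length is). pdl (sel bs is) g x * pdl (sel (map Not bs) is) h x) x"
      using pd_local[OF assms(1) x, of "pdl is (\<lambda>x. g x * h x)"] Cons.IH by simp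
    also have "\<dots> = (\<Sum>bs\<in>BL (length is). pd i (\<lambda>x. pdl (sel bs is) g x * pdl (sel (map Not bs) is) h x) x)"
      by (rule pd_sum) (intro differentiable_mult smooth_diff[OF assms(2) x] smooth_diff[OF assms(3) x])
    also have "\<dots> = (\<Sum>bs\<in>BL (length is). pdl (i # sel bs is) g x * pdl (sel (map Not bs) is) h x
          + pdl (sel bs is) g x * pdl (i # sel (map Not bs) is) h x)"
      by (rule sum.cong[OF refl], simp only: pdl.simps, rule pd_mult)
         (intro smooth_diff[OF assms(2) x] smooth_diff[OF assms(3) x])+
    also have "\<dots> = (\<Sum>bs\<in>BL (length (i # is)). pdl (sel bs (i # is)) g x * pdl (sel (map Not bs) (i # is)) h x)"
      by (simp add: sum_BL_Suc)
    finally show "pdl (i # is) (\<lambda>x. g x * h x) x =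
     (\<Sum>bs\<in>BL (length (i # is)). pdl (sel bs (i # is)) g x * pdl (sel (map Not bs) (i # is)) h x)" .
  qed
qed

lemma smooth_mult:
  fixes g h :: "real^'d::finite \<Rightarrow> real"
  assumes "open S" "smooth_on S g" "smooth_on S h"
  shows "smooth_on S (\<lambda>x. g x * h x)"
  unfolding smooth_on_def
proof (intro allI ballI)
  fix "is" x assume x: "x \<in> S"
  have "(\<lambda>x. \<Sum>bs\<in>BL (length is). pdl (sel bs is) g x * pdl (sel (map Not bs) is) h x) differentiable (at x)"
    by (intro differentiable_sum finite_BL ballI differentiable_mult smooth_diff[OF assms(2) x] smooth_diff[OF assms(3) x])
  then show "pdl is (\<lambda>x. g x * h x) differentiable (at x)"
    by (rule diff_local[OF assms(1) x]) (simp add: leibniz[OF assms])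
qed

definition nt :: "bool list \<Rightarrow> nat" where "nt bs = length (filter id bs)"

lemma nt_simps[simp]: "nt [] = 0" "nt (True # bs) = Suc (nt bs)" "nt (False # bs) = nt bs"
  by (auto simp: nt_def)

lemma nt_le: "nt bs \<le> length bs"
  by (simp add: nt_def)

lemma count_BL:
  "(\<Sum>bs\<in>BL n. \<Phi> (nt bs) (n - nt bs)) = (\<Sum>k\<le>n. real (n choose k) * \<Phi> k (n - k))"
proof (induction n arbitrary: \<Phi>)
  case 0
  have "BL 0 = {[]}" by (auto simp: BL_def)
  then show ?case by simp
next
  case (Suc n)
  have "(\<Sum>bs\<in>BL (Suc n). \<Phi> (nt bs) (Suc n - nt bs)) =
      (\<Sum>bs\<in>BL n. \<Phi> (Suc (nt bs)) (n - nt bs) + \<Phi> (nt bs) (Suc (n - nt bs)))"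
    unfolding sum_BL_Suc
  proof (rule sum.cong[OF refl])
    fix bs assume "bs \<in> BL n"
    then have "nt bs \<le> n" using nt_le[of bs] by (simp add: BL_def)
    then show "\<Phi> (nt (True # bs)) (Suc n - nt (True # bs)) + \<Phi> (nt (False # bs)) (Suc n - nt (False # bs)) =
          \<Phi> (Suc (nt bs)) (n - nt bs) + \<Phi> (nt bs) (Suc (n - nt bs))"
      by (simp add: Suc_diff_le)
  qed
  also have "\<dots> = (\<Sum>bs\<in>BL n. \<Phi> (Suc (nt bs)) (n - nt bs)) + (\<Sum>bs\<in>BL n. \<Phi> (nt bs) (Suc (n - nt bs)))"
    by (rule sum.distrib)
  also have "\<dots> = (\<Sum>k\<le>n. real (n choose k) * \<Phi> (Suc k) (n - k)) + (\<Sum>k\<le>n. real (n choose k) * \<Phi> k (Suc (n - k)))"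
    using Suc.IH[of "\<lambda>a b. \<Phi> (Suc a) b"] Suc.IH[of "\<lambda>a b. \<Phi> a (Suc b)"] by simp
  also have "\<dots> = (\<Sum>k\<le>Suc n. real (Suc n choose k) * \<Phi> k (Suc n - k))"
  proof -
    have A: "(\<Sum>k\<le>Suc n. real (Suc n choose k) * \<Phi> k (Suc n - k)) =
        \<Phi> 0 (Suc n) + (\<Sum>k\<le>n. real (Suc n choose Suc k) * \<Phi> (Suc k) (n - k))"
      by (subst sum.atMost_Suc_shift) simp
    have B: "(\<Sum>k\<le>n. real (n choose k) * \<Phi> k (Suc (n - k))) =
        \<Phi> 0 (Suc n) + (\<Sum>k\<le>n. real (n choose Suc k) * \<Phi> (Suc k) (n - k))"
    proof (cases n)
      case 0 then show ?thesis by simp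
    next
      case (Suc m)
      have "(\<Sum>k\<le>n. real (n choose k) * \<Phi> k (Suc (n - k))) =
         \<Phi> 0 (Suc n) + (\<Sum>k\<le>m. real (n choose Suc k) * \<Phi> (Suc k) (Suc (n - Suc k)))"
        unfolding Suc by (subst sum.atMost_Suc_shift) simp
      also have "(\<Sum>k\<le>m. real (n choose Suc k) * \<Phi> (Suc k) (Suc (n - Suc k))) =
          (\<Sum>k\<le>m. real (n choose Suc k) * \<Phi> (Suc k) (n - k))"
        by (rule sum.cong) (auto simp: Suc Suc_diff_le)
      also have "\<dots> = (\<Sum>k\<le>n. real (n choose Suc k) * \<Phi> (Suc k) (n - k))"
        unfolding Suc by (simp add: sum.atMost_Suc binomial_eq_0)
      finally show ?thesis .
    qed
    show ?thesis unfolding A B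
      by (simp add: sum.distrib distrib_right)
  qed
  finally show ?case .
qed

lemma sum_inv_sq: "(\<Sum>k\<le>n. 1 / (real k + 1)^2) \<le> 2 - 1 / (real n + 1)"
proof (induction n)
  case 0 then show ?case by simp
next
  case (Suc n)
  have "1 / (real n + 2)^2 \<le> 1 / (real n + 1) - 1 / (real n + 2)"
  proof -
    have "1 / (real n + 1) - 1 / (real n + 2) = 1 / ((real n + 1) * (real n + 2))"
      by (simp add: field_simps)
    also have "\<dots> \<ge> 1 / (real n + 2)^2"
      by (intro divide_left_mono) (auto simp: power2_eq_square)
    finally show ?thesis .
  qed
  then show ?case using Suc by (simp add: add.commute)
qed

lemma conv_bound:
  "(\<Sum>k\<le>n. 1 / ((real k + 1)^2 * (real (n - k) + 1)^2)) \<le> 8 / (real n + 1)^2"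
proof -
  have pt: "1 / ((real k + 1)^2 * (real (n - k) + 1)^2) \<le>
       2 / (real n + 2)^2 * (1 / (real k + 1)^2 + 1 / (real (n - k) + 1)^2)" if "k \<le> n" for k
  proof -
    define a where "a = real k + 1"
    define b where "b = real (n - k) + 1"
    have ab: "a > 0" "b > 0" "a + b = real n + 2" using that by (auto simp: a_def b_def)
    have "1 / (a^2 * b^2) * (a + b)^2 = (1/a + 1/b)^2" using ab by (simp add: field_simps power2_eq_square)
    also have "\<dots> \<le> 2 * (1/a^2 + 1/b^2)"
    proof -
      have "0 \<le> (1/a - 1/b)^2" by simp
      then have "(1/a + 1/b)^2 \<le> 2 * ((1/a)^2 + (1/b)^2)"
        unfolding power2_eq_square by (simp add: algebra_simps)
      then show ?thesis by (simp add: power_one_over)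
    qed
    finally have "1 / (a^2 * b^2) \<le> 2 * (1/a^2 + 1/b^2) / (a+b)^2"
      using ab by (simp add: field_simps)
    then show ?thesis using ab by (simp add: a_def b_def field_simps)
  qed
  have refl: "(\<Sum>k\<le>n. 1 / (real (n - k) + 1)^2) = (\<Sum>k\<le>n. 1 / (real k + 1)^2)"
    by (rule sum.reindex_bij_witness[of _ "\<lambda>k. n - k" "\<lambda>k. n - k"]) auto
  have "(\<Sum>k\<le>n. 1 / ((real k + 1)^2 * (real (n - k) + 1)^2)) \<le>
      (\<Sum>k\<le>n. 2 / (real n + 2)^2 * (1 / (real k + 1)^2 + 1 / (real (n - k) + 1)^2))"
    by (rule sum_mono) (use pt in auto)
  also have "\<dots> = 2 / (real n + 2)^2 * ((\<Sum>k\<le>n. 1 / (real k + 1)^2) + (\<Sum>k\<le>n. 1 / (real (n - k) + 1)^2))"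
    by (simp only: sum.distrib flip: sum_distrib_left)
  also have "\<dots> = 2 / (real n + 2)^2 * (2 * (\<Sum>k\<le>n. 1 / (real k + 1)^2))"
    by (simp only: refl) simp
  also have "\<dots> \<le> 2 / (real n + 2)^2 * (2 * 2)"
  proof -
    have "0 \<le> 1 / (real n + 1)" by simp
    then have "(\<Sum>k\<le>n. 1 / (real k + 1)^2) \<le> 2" using sum_inv_sq[of n] by linarith
    then show ?thesis by (intro mult_left_mono) auto
  qed
  also have "\<dots> \<le> 8 / (real n + 1)^2"
    by (simp add: frac_le power_mono)
  finally show ?thesis .
qed

lemma binom_bound:
  "(\<Sum>k\<le>n. real (n choose k) * (fact k / (real k + 1)^2 * (fact (n - k) / (real (n - k) + 1)^2)))
     \<le> fact n * (8 / (real n + 1)^2)"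
proof -
  have "(\<Sum>k\<le>n. real (n choose k) * (fact k / (real k + 1)^2 * (fact (n - k) / (real (n - k) + 1)^2)))
     = (\<Sum>k\<le>n. fact n * (1 / ((real k + 1)^2 * (real (n - k) + 1)^2)))"
  proof (rule sum.cong[OF refl])
    fix k assume "k \<in> {..n}"
    then have "real (n choose k) * fact k * fact (n - k) = fact n"
    proof -
      have "fact k * fact (n-k) * (n choose k) = (fact n :: nat)"
        by (rule binomial_fact_lemma) (use \<open>k \<in> {..n}\<close> in auto)
      then have "real (fact k * fact (n-k) * (n choose k)) = real (fact n)" by (simp only:)
      then show ?thesis by (simp only: of_nat_mult of_nat_fact mult_ac)
    qed
    then show "real (n choose k) * (fact k / (real k + 1)^2 * (fact (n - k) / (real (n - k) + 1)^2)) =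
       fact n * (1 / ((real k + 1)^2 * (real (n - k) + 1)^2))"
      by (simp add: field_simps)
  qed
  also have "\<dots> = fact n * (\<Sum>k\<le>n. 1 / ((real k + 1)^2 * (real (n - k) + 1)^2))"
    by (simp add: sum_distrib_left)
  also have "\<dots> \<le> fact n * (8 / (real n + 1)^2)"
    by (intro mult_left_mono conv_bound) auto
  finally show ?thesis .
qed

definition wt :: "'d::finite list \<Rightarrow> real^'d \<Rightarrow> real" where
  "wt is x = (\<Prod>l\<in>UNIV. (x $ l) ^ count (mset is) l)"

definition Bnd :: "(real^'d::finite) set \<Rightarrow> real \<Rightarrow> real \<Rightarrow> (real^'d \<Rightarrow> real) \<Rightarrow> bool" where
  "Bnd S e A g \<longleftrightarrow> smooth_on S g \<and> (\<forall>x\<in>S. \<forall>is. \<bar>wt is x * pdl is g x\<bar> \<le>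
      e * A ^ length is * (fact (length is) / (real (length is) + 1)^2))"

lemma mset_sel: "length bs = length is \<Longrightarrow> mset (sel bs is) + mset (sel (map Not bs) is) = mset is"
proof (induction "is" arbitrary: bs)
  case Nil then show ?case by simp
next
  case (Cons i "is")
  then obtain b bs' where "bs = b # bs'" "length bs' = length is" by (cases bs) auto
  then show ?case using Cons.IH[of bs'] by (cases b) auto
qed

lemma length_sel: "length bs = length is \<Longrightarrow> length (sel bs is) = nt bs"
proof (induction "is" arbitrary: bs)
  case Nil then show ?case by (simp add: nt_def)
next
  case (Cons i "is")
  then obtain b bs' where "bs = b # bs'" "length bs' = length is" by (cases bs) auto
  then show ?case using Cons.IH[of bs'] by (cases b) auto
qed

lemma length_sel_not: "length bs = length is \<Longrightarrow> length (sel (map Not bs) is) = length is - nt bs"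
proof -
  assume a: "length bs = length is"
  have "size (mset (sel bs is) + mset (sel (map Not bs) is)) = size (mset is)"
    using mset_sel[OF a] by simp
  then show ?thesis using length_sel[OF a] by simp
qed

lemma wt_split: "length bs = length is \<Longrightarrow> wt is x = wt (sel bs is) x * wt (sel (map Not bs) is) x"
  unfolding wt_def
  by (simp add: mset_sel[symmetric] power_add prod.distrib)

lemma wt_nonneg: "(\<forall>l. 0 < x $ l) \<Longrightarrow> wt is x > 0"
  unfolding wt_def by (intro prod_pos) auto

lemma Bnd_mult:
  fixes g h :: "real^'d::finite \<Rightarrow> real"
  assumes S: "open S" and g: "Bnd S e1 A g" and h: "Bnd S e2 A h"
    and e: "e1 \<ge> 0" "e2 \<ge> 0" "A \<ge> 0"
  shows "Bnd S (8 * e1 * e2) A (\<lambda>x. g x * h x)"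
  unfolding Bnd_def
proof (intro conjI ballI allI)
  show "smooth_on S (\<lambda>x. g x * h x)" using smooth_mult[OF S] g h by (auto simp: Bnd_def)
  fix x :: "real^'d" and "is" :: "'d list" assume x: "x \<in> S"
  define n where "n = length is"
  define \<psi> where "\<psi> k = fact k / (real k + 1)^2" for k
  have \<psi>0: "\<psi> k \<ge> 0" for k by (simp add: \<psi>_def)
  have "\<bar>wt is x * pdl is (\<lambda>x. g x * h x) x\<bar> =
      \<bar>\<Sum>bs\<in>BL n. (wt (sel bs is) x * pdl (sel bs is) g x) * (wt (sel (map Not bs) is) x * pdl (sel (map Not bs) is) h x)\<bar>"
  proof -
    have "wt is x * pdl is (\<lambda>x. g x * h x) x =
       (\<Sum>bs\<in>BL n. wt is x * (pdl (sel bs is) g x * pdl (sel (map Not bs) is) h x))"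
      using leibniz[OF S, of g h "is"] g h x by (auto simp: Bnd_def n_def sum_distrib_left)
    also have "\<dots> = (\<Sum>bs\<in>BL n. (wt (sel bs is) x * pdl (sel bs is) g x) * (wt (sel (map Not bs) is) x * pdl (sel (map Not bs) is) h x))"
      by (rule sum.cong[OF refl]) (simp add: wt_split[of _ "is"] BL_def n_def)
    finally show ?thesis by simp
  qed
  also have "\<dots> \<le> (\<Sum>bs\<in>BL n. \<bar>wt (sel bs is) x * pdl (sel bs is) g x\<bar> * \<bar>wt (sel (map Not bs) is) x * pdl (sel (map Not bs) is) h x\<bar>)"
    by (rule order.trans[OF sum_abs]) (simp add: abs_mult)
  also have "\<dots> \<le> (\<Sum>bs\<in>BL n. (e1 * A ^ nt bs * \<psi> (nt bs)) * (e2 * A ^ (n - nt bs) * \<psi> (n - nt bs)))"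
  proof (rule sum_mono)
    fix bs assume bs: "bs \<in> BL n"
    then have l: "length bs = length is" by (simp add: BL_def n_def)
    have 1: "\<bar>wt (sel bs is) x * pdl (sel bs is) g x\<bar> \<le> e1 * A ^ nt bs * \<psi> (nt bs)"
    proof -
      have "\<bar>wt (sel bs is) x * pdl (sel bs is) g x\<bar> \<le> e1 * A ^ length (sel bs is) * (fact (length (sel bs is)) / (real (length (sel bs is)) + 1)^2)"
        using g x unfolding Bnd_def by blast
      then show ?thesis using length_sel[OF l] by (simp add: \<psi>_def)
    qed
    have 2: "\<bar>wt (sel (map Not bs) is) x * pdl (sel (map Not bs) is) h x\<bar> \<le> e2 * A ^ (n - nt bs) * \<psi> (n - nt bs)"
    proof -
      have "\<bar>wt (sel (map Not bs) is) x * pdl (sel (map Not bs) is) h x\<bar> \<le> e2 * A ^ length (sel (map Not bs) is) * (fact (length (sel (map Not bs) is)) / (real (length (sel (map Not bs) is)) + 1)^2)"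
        using h x unfolding Bnd_def by blast
      then show ?thesis using length_sel_not[OF l] by (simp add: \<psi>_def n_def)
    qed
    show "\<bar>wt (sel bs is) x * pdl (sel bs is) g x\<bar> * \<bar>wt (sel (map Not bs) is) x * pdl (sel (map Not bs) is) h x\<bar>
        \<le> (e1 * A ^ nt bs * \<psi> (nt bs)) * (e2 * A ^ (n - nt bs) * \<psi> (n - nt bs))"
      by (rule mult_mono[OF 1 2]) (use e \<psi>0 in auto)
  qed
  also have "\<dots> = e1 * e2 * A ^ n * (\<Sum>bs\<in>BL n. \<psi> (nt bs) * \<psi> (n - nt bs))"
  proof -
    have "(\<Sum>bs\<in>BL n. (e1 * A ^ nt bs * \<psi> (nt bs)) * (e2 * A ^ (n - nt bs) * \<psi> (n - nt bs))) =
        (\<Sum>bs\<in>BL n. e1 * e2 * A ^ n * (\<psi> (nt bs) * \<psi> (n - nt bs)))"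
    proof (rule sum.cong[OF refl])
      fix bs assume "bs \<in> BL n"
      then have "nt bs \<le> n" using nt_le[of bs] by (simp add: BL_def)
      then have "A ^ nt bs * A ^ (n - nt bs) = A ^ n" by (simp flip: power_add)
      then show "(e1 * A ^ nt bs * \<psi> (nt bs)) * (e2 * A ^ (n - nt bs) * \<psi> (n - nt bs)) =
          e1 * e2 * A ^ n * (\<psi> (nt bs) * \<psi> (n - nt bs))"
        by (metis (no_types, lifting) mult.assoc mult.left_commute)
    qed
    then show ?thesis by (simp add: sum_distrib_left)
  qed
  also have "\<dots> = e1 * e2 * A ^ n * (\<Sum>k\<le>n. real (n choose k) * (\<psi> k * \<psi> (n - k)))"
    using count_BL[where n=n and \<Phi>="\<lambda>a b. \<psi> a * \<psi> b"] by simp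
  also have "\<dots> \<le> e1 * e2 * A ^ n * (fact n * (8 / (real n + 1)^2))"
    by (intro mult_left_mono) (use binom_bound[of n] e in \<open>auto simp: \<psi>_def\<close>)
  also have "\<dots> = 8 * e1 * e2 * A ^ length is * (fact (length is) / (real (length is) + 1)^2)"
    by (simp add: n_def)
  finally show "\<bar>wt is x * pdl is (\<lambda>x. g x * h x) x\<bar> \<le> 8 * e1 * e2 * A ^ length is * (fact (length is) / (real (length is) + 1)^2)" .
qed

lemma Bnd_mono:
  fixes g :: "real^'d::finite \<Rightarrow> real"
  shows "Bnd S e A g \<Longrightarrow> e \<le> e' \<Longrightarrow> A \<ge> 0 \<Longrightarrow> Bnd S e' A g"
  unfolding Bnd_def
proof (intro conjI ballI allI, simp)
  fix x :: "real^'d" and "is" :: "'d list" assume a: "smooth_on S g \<and> (\<forall>x\<in>S. \<forall>is. \<bar>wt is x * pdl is g x\<bar> \<le> e * A ^ length is * (fact (length is) / (real (length is) + 1)\<^sup>2))"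
    "e \<le> e'" "A \<ge> 0" "x \<in> S"
  have "e * A ^ length is * (fact (length is) / (real (length is) + 1)\<^sup>2) \<le> e' * A ^ length is * (fact (length is) / (real (length is) + 1)\<^sup>2)"
    using a(2,3) by (intro mult_right_mono) auto
  then show "\<bar>wt is x * pdl is g x\<bar> \<le> e' * A ^ length is * (fact (length is) / (real (length is) + 1)\<^sup>2)"
    using a(1,4) by (meson order.trans)
qed

lemma Bnd_local: "open S \<Longrightarrow> (\<And>y. y \<in> S \<Longrightarrow> g y = h y) \<Longrightarrow> Bnd S e A g \<Longrightarrow> Bnd S e A h"
  unfolding Bnd_def using smooth_local[of S g h] pdl_local[of S g h] by metis

lemma Bnd_sum:
  fixes g :: "'a \<Rightarrow> real^'d::finite \<Rightarrow> real"
  assumes "open S" "finite I" "\<And>k. k \<in> I \<Longrightarrow> Bnd S (e k) A (g k)"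
  shows "Bnd S (\<Sum>k\<in>I. e k) A (\<lambda>x. \<Sum>k\<in>I. g k x)"
  unfolding Bnd_def
proof (intro conjI ballI allI)
  show "smooth_on S (\<lambda>x. \<Sum>k\<in>I. g k x)" using assms by (intro smooth_sum) (auto simp: Bnd_def)
  fix x :: "real^'d" and "is" :: "'d list" assume x: "x \<in> S"
  have "\<bar>wt is x * pdl is (\<lambda>x. \<Sum>k\<in>I. g k x) x\<bar> = \<bar>\<Sum>k\<in>I. wt is x * pdl is (g k) x\<bar>"
    using pdl_sum[OF assms(1), of I g "is"] assms(3) x by (auto simp: Bnd_def sum_distrib_left)
  also have "\<dots> \<le> (\<Sum>k\<in>I. \<bar>wt is x * pdl is (g k) x\<bar>)" by (rule sum_abs)
  also have "\<dots> \<le> (\<Sum>k\<in>I. e k * A ^ length is * (fact (length is) / (real (length is) + 1)^2))"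
    by (rule sum_mono) (use assms(3) x in \<open>auto simp: Bnd_def\<close>)
  also have "\<dots> = (\<Sum>k\<in>I. e k) * A ^ length is * (fact (length is) / (real (length is) + 1)^2)"
    by (simp only: sum_distrib_right)
  finally show "\<bar>wt is x * pdl is (\<lambda>x. \<Sum>k\<in>I. g k x) x\<bar> \<le> (\<Sum>k\<in>I. e k) * A ^ length is * (fact (length is) / (real (length is) + 1)^2)" .
qed

lemma Bnd_add:
  fixes g h :: "real^'d::finite \<Rightarrow> real"
  assumes "open S" "Bnd S e1 A g" "Bnd S e2 A h"
  shows "Bnd S (e1 + e2) A (\<lambda>x. g x + h x)"
proof -
  have "Bnd S (\<Sum>b\<in>UNIV. if b then e1 else e2) A (\<lambda>x. \<Sum>b\<in>UNIV. (if b then g else h) x)"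
    by (rule Bnd_sum[OF assms(1)]) (use assms in auto)
  moreover have "(\<Sum>b\<in>UNIV. if b then e1 else e2) = e1 + e2" by (simp add: UNIV_bool)
  moreover have "(\<lambda>x. \<Sum>b\<in>UNIV. (if b then g else h) x) = (\<lambda>x. g x + h x)" by (simp add: UNIV_bool add.commute)
  ultimately show ?thesis by simp
qed

lemma Bnd_cmult:
  fixes g :: "real^'d::finite \<Rightarrow> real"
  assumes "open S" "Bnd S e A g"
  shows "Bnd S (\<bar>c\<bar> * e) A (\<lambda>x. c * g x)"
  unfolding Bnd_def
proof (intro conjI ballI allI)
  show "smooth_on S (\<lambda>x. c * g x)" using assms by (intro smooth_cmult) (auto simp: Bnd_def)
  fix x :: "real^'d" and "is" :: "'d list" assume x: "x \<in> S"
  have "\<bar>wt is x * pdl is (\<lambda>x. c * g x) x\<bar> = \<bar>c\<bar> * \<bar>wt is x * pdl is g x\<bar>"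
    using pdl_cmult[OF assms(1), of g "is" c] assms(2) x by (auto simp: Bnd_def abs_mult)
  also have "\<dots> \<le> \<bar>c\<bar> * (e * A ^ length is * (fact (length is) / (real (length is) + 1)^2))"
    by (rule mult_left_mono) (use assms(2) x in \<open>auto simp: Bnd_def\<close>)
  finally show "\<bar>wt is x * pdl is (\<lambda>x. c * g x) x\<bar> \<le> \<bar>c\<bar> * e * A ^ length is * (fact (length is) / (real (length is) + 1)^2)"
    by (simp add: mult.assoc)
qed

lemma Bnd_const:
  fixes S :: "(real^'d::finite) set"
  assumes "A \<ge> 0"
  shows "Bnd S \<bar>c\<bar> A (\<lambda>x. c)"
  unfolding Bnd_def
proof (intro conjI ballI allI)
  show "smooth_on S (\<lambda>x. c)" by (rule smooth_const)
  fix x :: "real^'d" and "is" :: "'d list"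
  show "\<bar>wt is x * pdl is (\<lambda>x. c) x\<bar> \<le> \<bar>c\<bar> * A ^ length is * (fact (length is) / (real (length is) + 1)^2)"
  proof (cases "is = []")
    case True then show ?thesis by (simp add: wt_def)
  next
    case False
    then have "pdl is (\<lambda>x. c) x = 0" by (simp add: pdl_const)
    then show ?thesis using assms by simp
  qed
qed

definition mon :: "('d::finite \<Rightarrow> real) \<Rightarrow> real^'d \<Rightarrow> real" where
  "mon \<gamma> x = (\<Prod>l\<in>UNIV. (x $ l) powr \<gamma> l)"

definition Opos :: "(real^'d::finite) set" where "Opos = {x. \<forall>l. 0 < x $ l}"

lemma open_Opos: "open (Opos :: (real^'d::finite) set)"
proof -
  have eq: "(Opos :: (real^'d) set) = (\<Inter>l\<in>UNIV. {x. 0 < x $ l})" by (auto simp: Opos_def)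
  have o: "open {x::real^'d. 0 < x $ l}" for l
    by (rule open_Collect_less) (intro continuous_intros)+
  show ?thesis unfolding eq by (intro open_INT ballI o) simp
qed

lemma mono_has_derivative:
  fixes x :: "real^'d::finite" and \<gamma> :: "'d \<Rightarrow> real"
  assumes x: "x \<in> Opos"
  shows "(mon \<gamma> has_derivative (\<lambda>h. \<Sum>l\<in>UNIV. ((x $ l) powr \<gamma> l * (0 * ln (x $ l) + h $ l * \<gamma> l / x $ l)) *
      (\<Prod>j\<in>UNIV - {l}. (x $ j) powr \<gamma> j))) (at x)"
  unfolding mon_def[abs_def]
proof (rule has_derivative_prod)
  fix l
  have p: "0 < x $ l" using x by (auto simp: Opos_def)
  show "((\<lambda>x. x $ l powr \<gamma> l) has_derivative (\<lambda>h. (x $ l) powr \<gamma> l * (0 * ln (x $ l) + h $ l * \<gamma> l / x $ l))) (at x)"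
    by (rule has_derivative_powr[OF bounded_linear_imp_has_derivative[OF bounded_linear_vec_nth] has_derivative_const p UNIV_I])
qed

lemma mono_differentiable:
  fixes x :: "real^'d::finite" and \<gamma> :: "'d \<Rightarrow> real"
  shows "x \<in> Opos \<Longrightarrow> mon \<gamma> differentiable (at x)"
  using mono_has_derivative unfolding differentiable_def by blast

lemma pd_mono:
  fixes x :: "real^'d::finite" and \<gamma> :: "'d \<Rightarrow> real"
  assumes x: "x \<in> Opos"
  shows "pd i (mon \<gamma>) x = \<gamma> i * mon (\<lambda>l. \<gamma> l - (if l = i then 1 else 0)) x"
proof -
  have p: "\<And>l. 0 < x $ l" using x by (auto simp: Opos_def)
  have "pd i (mon \<gamma>) x = (\<Sum>l\<in>UNIV. ((x $ l) powr \<gamma> l * (0 * ln (x $ l) + axis i 1 $ l * \<gamma> l / x $ l)) *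
      (\<Prod>j\<in>UNIV - {l}. (x $ j) powr \<gamma> j))"
    by (rule pd_has_derivative[OF mono_has_derivative[OF x]])
  also have "\<dots> = ((x $ i) powr \<gamma> i * (\<gamma> i / x $ i)) * (\<Prod>j\<in>UNIV - {i}. (x $ j) powr \<gamma> j)"
    by (subst sum.remove[of _ i]) (auto simp: axis_def)
  also have "\<dots> = \<gamma> i * ((x $ i) powr (\<gamma> i - 1) * (\<Prod>j\<in>UNIV - {i}. (x $ j) powr \<gamma> j))"
    using p[of i] by (simp add: powr_diff field_simps)
  also have "\<dots> = \<gamma> i * mon (\<lambda>l. \<gamma> l - (if l = i then 1 else 0)) x"
    unfolding mon_def by (subst prod.remove[of _ i]) (auto intro!: prod.cong)
  finally show ?thesis .
qed

fun coef :: "'d list \<Rightarrow> ('d \<Rightarrow> real) \<Rightarrow> real" where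
  "coef [] \<gamma> = 1"
| "coef (i # is) \<gamma> = coef is \<gamma> * (\<gamma> i - real (count (mset is) i))"

definition shiftc :: "'d list \<Rightarrow> ('d \<Rightarrow> real) \<Rightarrow> ('d \<Rightarrow> real)" where
  "shiftc is \<gamma> = (\<lambda>l. \<gamma> l - real (count (mset is) l))"

lemma shiftc_Cons: "(\<lambda>l. shiftc is \<gamma> l - (if l = i then 1 else 0)) = shiftc (i # is) \<gamma>"
  by (auto simp: shiftc_def)

lemma pdl_aff:
  fixes \<gamma> :: "'d::finite \<Rightarrow> real"
  shows "\<forall>x\<in>Opos. pdl is (\<lambda>x. a * mon \<gamma> x + d) x =
     (if is = [] then a * mon \<gamma> x + d else a * coef is \<gamma> * mon (shiftc is \<gamma>) x)"
proof (induction "is")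
  case Nil then show ?case by simp
next
  case (Cons i js)
  show ?case
  proof
    fix x :: "real^'d" assume x: "x \<in> Opos"
    have "pdl (i # js) (\<lambda>x. a * mon \<gamma> x + d) x =
        pd i (\<lambda>x. if js = [] then a * mon \<gamma> x + d else a * coef js \<gamma> * mon (shiftc js \<gamma>) x) x"
      using pd_local[OF open_Opos x, of "pdl js (\<lambda>x. a * mon \<gamma> x + d)"] Cons.IH by simp
    also have "\<dots> = a * coef (i # js) \<gamma> * mon (shiftc (i # js) \<gamma>) x"
    proof (cases "js = []")
      case True
      have "pd i (\<lambda>x. a * mon \<gamma> x + d) x = pd i (\<lambda>x. a * mon \<gamma> x) x + pd i (\<lambda>x. d) x"
        by (rule pd_add) (auto intro!: differentiable_mult mono_differentiable x)
      also have "\<dots> = a * pd i (mon \<gamma>) x" by (simp add: pd_const pd_cmult mono_differentiable x)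
      finally show ?thesis using True pd_mono[OF x, of i \<gamma>] shiftc_Cons[of "[]" \<gamma> i]
        by (simp add: shiftc_def)
    next
      case False
      have "pd i (\<lambda>x. a * coef js \<gamma> * mon (shiftc js \<gamma>) x) x = a * coef js \<gamma> * pd i (mon (shiftc js \<gamma>)) x"
        by (rule pd_cmult) (rule mono_differentiable[OF x])
      then show ?thesis using False pd_mono[OF x, of i "shiftc js \<gamma>"] shiftc_Cons[of js \<gamma> i]
        by (simp add: shiftc_def mult_ac)
    qed
    finally show "pdl (i # js) (\<lambda>x. a * mon \<gamma> x + d) x =
     (if i # js = [] then a * mon \<gamma> x + d else a * coef (i # js) \<gamma> * mon (shiftc (i # js) \<gamma>) x)" by simp
  qed
qed

lemma smooth_aff:
  fixes \<gamma> :: "'d::finite \<Rightarrow> real"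
  shows "smooth_on Opos (\<lambda>x. a * mon \<gamma> x + d)"
  unfolding smooth_on_def
proof (intro allI ballI)
  fix "is" and x :: "real^'d" assume x: "x \<in> Opos"
  have "(\<lambda>x. if is = [] then a * mon \<gamma> x + d else a * coef is \<gamma> * mon (shiftc is \<gamma>) x) differentiable (at x)"
    by (cases "is = []") (auto intro!: differentiable_mult differentiable_add mono_differentiable x)
  then show "pdl is (\<lambda>x. a * mon \<gamma> x + d) differentiable (at x)"
    by (rule diff_local[OF open_Opos x]) (simp add: pdl_aff)
qed

lemma smooth_subset: "smooth_on S g \<Longrightarrow> T \<subseteq> S \<Longrightarrow> smooth_on T g"
  unfolding smooth_on_def by blast

lemma wt_mono:
  fixes x :: "real^'d::finite" and \<gamma> :: "'d \<Rightarrow> real"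
  shows "x \<in> Opos \<Longrightarrow> wt is x * mon (shiftc is \<gamma>) x = mon \<gamma> x"
  unfolding wt_def mon_def shiftc_def
proof (simp only: prod.distrib[symmetric], intro prod.cong refl)
  fix l assume "x \<in> Opos"
  then have p: "0 < x $ l" by (auto simp: Opos_def)
  show "x $ l ^ count (mset is) l * x $ l powr (\<gamma> l - real (count (mset is) l)) = x $ l powr \<gamma> l"
    using p by (simp add: powr_diff powr_realpow)
qed

lemma coef_bound:
  assumes "\<And>l. \<bar>\<gamma> l\<bar> + 1 \<le> L"
  shows "\<bar>coef is \<gamma>\<bar> \<le> L ^ length is * fact (length is)"
proof (induction "is")
  case Nil then show ?case by simp
next
  case (Cons i "is")
  have L1: "L \<ge> 1" using assms[of i] by linarith
  have c: "real (count (mset is) i) \<le> real (length is)"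
    by (metis count_le_size of_nat_mono size_mset)
  have "\<bar>\<gamma> i - real (count (mset is) i)\<bar> \<le> \<bar>\<gamma> i\<bar> + real (length is)" using c by linarith
  also have "\<dots> \<le> L * (real (length is) + 1)"
  proof -
    have "(L - 1) * real (length is) \<ge> 0" using L1 by simp
    then show ?thesis using assms[of i] by (simp add: algebra_simps)
  qed
  finally have "\<bar>coef (i # is) \<gamma>\<bar> \<le> (L ^ length is * fact (length is)) * (L * (real (length is) + 1))"
    using Cons.IH by (simp add: abs_mult) (rule mult_mono, auto)
  then show ?case by (simp add: algebra_simps)
qed

lemma sq_le_4pow: "(real n + 1)^2 \<le> 4 ^ n"
proof (induction n)
  case 0 then show ?case by simp
next
  case (Suc n)
  show ?case
  proof (cases n)
    case 0 then show ?thesis by simp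
  next
    case (Suc m)
    have "(real (Suc n) + 1)^2 \<le> 4 * (real n + 1)^2" using Suc by (simp add: power2_eq_square algebra_simps)
    also have "\<dots> \<le> 4 * 4 ^ n" using Suc.IH by simp
    finally show ?thesis by simp
  qed
qed

lemma Bnd_aff:
  fixes \<gamma> :: "'d::finite \<Rightarrow> real"
  assumes S: "open S" "S \<subseteq> Opos" and L: "\<And>l. \<bar>\<gamma> l\<bar> + 1 \<le> L"
    and e: "e > 0" and small: "\<And>x. x \<in> S \<Longrightarrow> \<bar>a * mon \<gamma> x + d\<bar> \<le> e"
    and R: "\<And>x. x \<in> S \<Longrightarrow> \<bar>a * mon \<gamma> x\<bar> \<le> R"
    and A: "A \<ge> 4 * L * max 1 (R / e)"
  shows "Bnd S e A (\<lambda>x. a * mon \<gamma> x + d)"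
  unfolding Bnd_def
proof (intro conjI ballI allI)
  show "smooth_on S (\<lambda>x. a * mon \<gamma> x + d)" by (rule smooth_subset[OF smooth_aff S(2)])
  fix x :: "real^'d" and "is" :: "'d list" assume x: "x \<in> S"
  then have xo: "x \<in> Opos" using S by auto
  show "\<bar>wt is x * pdl is (\<lambda>x. a * mon \<gamma> x + d) x\<bar> \<le> e * A ^ length is * (fact (length is) / (real (length is) + 1)^2)"
  proof (cases "is = []")
    case True then show ?thesis using small[OF x] by (simp add: wt_def pdl_aff)
  next
    case False
    define n where "n = length is"
    have n1: "n \<ge> 1" using False by (cases "is") (auto simp: n_def)
    have L1: "L \<ge> 1" using L[of undefined] by linarith
    have "\<bar>wt is x * pdl is (\<lambda>x. a * mon \<gamma> x + d) x\<bar> = \<bar>coef is \<gamma>\<bar> * \<bar>a * mon \<gamma> x\<bar>"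
    proof -
      have "pdl is (\<lambda>x. a * mon \<gamma> x + d) x = a * coef is \<gamma> * mon (shiftc is \<gamma>) x"
        using False xo pdl_aff[of "is" a \<gamma> d] by auto
      then have "wt is x * pdl is (\<lambda>x. a * mon \<gamma> x + d) x = coef is \<gamma> * (a * (wt is x * mon (shiftc is \<gamma>) x))"
        by (simp add: mult_ac)
      then show ?thesis using wt_mono[OF xo, of "is" \<gamma>] by (simp add: abs_mult)
    qed
    also have "\<dots> \<le> (L ^ n * fact n) * R"
    proof (rule mult_mono)
      show "\<bar>coef is \<gamma>\<bar> \<le> L ^ n * fact n" unfolding n_def by (rule coef_bound) (rule L)
    qed (use R[OF x] L1 in auto)
    also have "\<dots> \<le> e * A ^ n * (fact n / (real n + 1)^2)"
    proof -
      define m where "m = max 1 (R / e)"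
      have m1: "m \<ge> 1" "R / e \<le> m" by (auto simp: m_def)
      have R0: "R \<ge> 0" using R[OF x] by linarith
      have "m \<le> m ^ n" using m1 n1 by (metis power_increasing power_one_right)
      have "(4 * L * m) ^ n \<le> A ^ n"
        using A m1 L1 by (intro power_mono) (auto simp: m_def)
      have "R \<le> e * m" using m1(2) e by (simp add: divide_le_eq mult.commute)
      have "L ^ n * R * (real n + 1)^2 \<le> L ^ n * (e * m) * 4 ^ n"
        by (intro mult_mono \<open>R \<le> e * m\<close> sq_le_4pow) (use L1 e m1 R0 in auto)
      also have "\<dots> = e * ((4 * L) ^ n * m)" by (simp add: power_mult_distrib mult_ac)
      also have "\<dots> \<le> e * ((4 * L) ^ n * m ^ n)"
        using \<open>m \<le> m ^ n\<close> e L1 by (intro mult_left_mono) auto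
      also have "\<dots> = e * (4 * L * m) ^ n" by (simp add: power_mult_distrib)
      also have "\<dots> \<le> e * A ^ n" using \<open>(4 * L * m) ^ n \<le> A ^ n\<close> e by simp
      finally have *: "L ^ n * R * (real n + 1)^2 \<le> e * A ^ n" .
      have "(L ^ n * fact n) * R = (L ^ n * R * (real n + 1)^2) * (fact n / (real n + 1)^2)"
        by (simp add: field_simps)
      also have "\<dots> \<le> e * A ^ n * (fact n / (real n + 1)^2)"
        by (rule mult_right_mono[OF *]) simp
      finally show ?thesis .
    qed
    finally show ?thesis by (simp add: n_def)
  qed
qed

definition DB :: "'d set \<Rightarrow> (real^'d::finite) set \<Rightarrow> real \<Rightarrow> real \<Rightarrow> real \<Rightarrow> (real^'d \<Rightarrow> real) \<Rightarrow> bool" where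
  "DB Ls S e \<kappa> A g \<longleftrightarrow> Bnd S e A g \<and> (\<forall>l\<in>Ls. Bnd S (e * \<kappa>) A (pd l g))"

lemma Bnd_smooth: "Bnd S e A g \<Longrightarrow> smooth_on S g"
  by (simp add: Bnd_def)

lemma DB_mult:
  fixes g h :: "real^'d::finite \<Rightarrow> real"
  assumes S: "open S" and g: "DB Ls S e1 \<kappa>1 A g" and h: "DB Ls S e2 \<kappa>2 A h"
    and e: "e1 \<ge> 0" "e2 \<ge> 0" "\<kappa>1 \<ge> 0" "\<kappa>2 \<ge> 0" "A \<ge> 0"
  shows "DB Ls S (8 * e1 * e2) (\<kappa>1 + \<kappa>2) A (\<lambda>x. g x * h x)"
  unfolding DB_def
proof (intro conjI ballI)
  show "Bnd S (8 * e1 * e2) A (\<lambda>x. g x * h x)"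
    using Bnd_mult[OF S _ _ e(1,2,5)] g h by (auto simp: DB_def)
  fix l assume l: "l \<in> Ls"
  have gs: "smooth_on S g" and hs: "smooth_on S h" using g h by (auto simp: DB_def Bnd_def)
  have "Bnd S (8 * (e1 * \<kappa>1) * e2 + 8 * e1 * (e2 * \<kappa>2)) A (\<lambda>x. pd l g x * h x + g x * pd l h x)"
    by (rule Bnd_add[OF S]; rule Bnd_mult[OF S])
       (use g h l e in \<open>auto simp: DB_def\<close>)
  then have "Bnd S (8 * (e1 * \<kappa>1) * e2 + 8 * e1 * (e2 * \<kappa>2)) A (pd l (\<lambda>x. g x * h x))"
  proof (rule Bnd_local[OF S, rotated])
    fix y assume y: "y \<in> S"
    show "pd l g y * h y + g y * pd l h y = pd l (\<lambda>x. g x * h x) y"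
      using pd_mult[OF smooth_diff[OF gs y, of "[]"] smooth_diff[OF hs y, of "[]"]] by simp
  qed
  moreover have "8 * (e1 * \<kappa>1) * e2 + 8 * e1 * (e2 * \<kappa>2) = 8 * e1 * e2 * (\<kappa>1 + \<kappa>2)"
    by (simp add: algebra_simps)
  ultimately show "Bnd S (8 * e1 * e2 * (\<kappa>1 + \<kappa>2)) A (pd l (\<lambda>x. g x * h x))" by simp
qed

lemma DB_one:
  fixes S :: "(real^'d::finite) set"
  assumes "A \<ge> 0"
  shows "DB Ls S 1 0 A (\<lambda>x. 1)"
proof -
  have "pd l (\<lambda>x::real^'d. 1::real) = (\<lambda>x. 0)" for l by (auto simp: pd_const)
  then show ?thesis using Bnd_const[OF assms, of S 1] Bnd_const[OF assms, of S 0]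
    by (auto simp: DB_def)
qed

lemma DB_cmult:
  fixes g :: "real^'d::finite \<Rightarrow> real"
  assumes S: "open S" and g: "DB Ls S e \<kappa> A g"
  shows "DB Ls S (\<bar>c\<bar> * e) \<kappa> A (\<lambda>x. c * g x)"
  unfolding DB_def
proof (intro conjI ballI)
  show "Bnd S (\<bar>c\<bar> * e) A (\<lambda>x. c * g x)" using Bnd_cmult[OF S] g by (auto simp: DB_def)
  fix l assume l: "l \<in> Ls"
  have gs: "smooth_on S g" using g by (auto simp: DB_def Bnd_def)
  have "Bnd S (\<bar>c\<bar> * (e * \<kappa>)) A (\<lambda>x. c * pd l g x)" using Bnd_cmult[OF S] g l by (auto simp: DB_def)
  then have "Bnd S (\<bar>c\<bar> * (e * \<kappa>)) A (pd l (\<lambda>x. c * g x))"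
  proof (rule Bnd_local[OF S, rotated])
    fix y assume y: "y \<in> S"
    show "c * pd l g y = pd l (\<lambda>x. c * g x) y"
      using pd_cmult[OF smooth_diff[OF gs y, of "[]"]] by simp
  qed
  then show "Bnd S (\<bar>c\<bar> * e * \<kappa>) A (pd l (\<lambda>x. c * g x))" by (simp add: mult.assoc)
qed

lemma DB_local:
  fixes g h :: "real^'d::finite \<Rightarrow> real"
  assumes S: "open S" and eq: "\<And>y. y \<in> S \<Longrightarrow> g y = h y" and g: "DB Ls S e \<kappa> A g"
  shows "DB Ls S e \<kappa> A h"
  unfolding DB_def
proof (intro conjI ballI)
  show "Bnd S e A h" using Bnd_local[OF S eq] g by (auto simp: DB_def)
  fix l assume "l \<in> Ls"
  then have "Bnd S (e * \<kappa>) A (pd l g)" using g by (auto simp: DB_def)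
  then show "Bnd S (e * \<kappa>) A (pd l h)"
    by (rule Bnd_local[OF S, rotated]) (rule pd_local[OF S _ eq])
qed

lemma DB_power:
  fixes g :: "real^'d::finite \<Rightarrow> real"
  assumes S: "open S" and g: "DB Ls S e \<kappa> A g" and e: "e \<ge> 0" "\<kappa> \<ge> 0" "A \<ge> 0"
  shows "DB Ls S ((8 * e) ^ k) (real k * \<kappa>) A (\<lambda>x. g x ^ k)"
proof (induction k)
  case 0 then show ?case using DB_one[OF e(3)] by simp
next
  case (Suc k)
  have "DB Ls S (8 * e * (8 * e) ^ k) (\<kappa> + real k * \<kappa>) A (\<lambda>x. g x * g x ^ k)"
    by (rule DB_mult[OF S g Suc]) (use e in auto)
  then show ?case by (simp add: algebra_simps)
qed

lemma DB_prod:
  fixes G :: "'i \<Rightarrow> real^'d::finite \<Rightarrow> real"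
  assumes S: "open S" and fin: "finite I" and A: "A \<ge> 0"
    and G: "\<And>i. i \<in> I \<Longrightarrow> DB Ls S (E i) (\<Lambda> i) A (G i)"
    and E: "\<And>i. i \<in> I \<Longrightarrow> E i \<ge> 0" "\<And>i. i \<in> I \<Longrightarrow> \<Lambda> i \<ge> 0"
  shows "DB Ls S (\<Prod>i\<in>I. 8 * E i) (\<Sum>i\<in>I. \<Lambda> i) A (\<lambda>x. \<Prod>i\<in>I. G i x)"
  using fin G E
proof (induction I rule: finite_induct)
  case empty then show ?case using DB_one[OF A] by simp
next
  case (insert j I)
  have "DB Ls S (8 * E j * (\<Prod>i\<in>I. 8 * E i)) (\<Lambda> j + (\<Sum>i\<in>I. \<Lambda> i)) A (\<lambda>x. G j x * (\<Prod>i\<in>I. G i x))"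
    by (rule DB_mult[OF S]) (use insert A in \<open>auto intro!: prod_nonneg sum_nonneg\<close>)
  then show ?case using insert by (simp add: mult.assoc)
qed

lemma linear_expand:
  fixes D :: "real^'d::finite \<Rightarrow> real"
  assumes "linear D"
  shows "D h = (\<Sum>j\<in>UNIV. h $ j * D (axis j 1))"
proof -
  have "h = (\<Sum>j\<in>UNIV. h $ j *\<^sub>R axis j 1)"
    using basis_expansion[of h] by (simp add: scalar_mult_eq_scaleR)
  then have "D h = D (\<Sum>j\<in>UNIV. h $ j *\<^sub>R axis j 1)" by simp
  also have "\<dots> = (\<Sum>j\<in>UNIV. h $ j * D (axis j 1))"
    using assms by (simp add: linear_sum linear_scale)
  finally show ?thesis .
qed

lemma has_derivative_partials:
  fixes g :: "real^'d::finite \<Rightarrow> real"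
  assumes "g differentiable (at x)"
  shows "(g has_derivative (\<lambda>h. \<Sum>j\<in>UNIV. h $ j * pd j g x)) (at x)"
proof -
  obtain D where D: "(g has_derivative D) (at x)" using assms by (auto simp: differentiable_def)
  have "D h = (\<Sum>j\<in>UNIV. h $ j * pd j g x)" for h
    using linear_expand[OF has_derivative_linear[OF D], of h] pd_has_derivative[OF D] by simp
  then have "D = (\<lambda>h. \<Sum>j\<in>UNIV. h $ j * pd j g x)" by auto
  then show ?thesis using D by simp
qed

lemma tail_bound:
  fixes p M :: "nat \<Rightarrow> real"
  assumes "summable M" "\<And>k. \<bar>p k\<bar> \<le> M k"
  shows "\<bar>(\<Sum>k. p k) - (\<Sum>k<n. p k)\<bar> \<le> (\<Sum>k. M (k + n))"
proof -
  have sp: "summable p" using assms by (intro summable_comparison_test[of p M]) auto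
  have "(\<Sum>k. p k) - (\<Sum>k<n. p k) = (\<Sum>k. p (k + n))"
    using suminf_split_initial_segment[OF sp, of n] by simp
  also have "\<bar>\<dots>\<bar> \<le> (\<Sum>k. \<bar>p (k + n)\<bar>)"
    by (rule summable_rabs, rule summable_ignore_initial_segment, rule summable_comparison_test[of _ M])
       (use assms in auto)
  also have "\<dots> \<le> (\<Sum>k. M (k + n))"
    by (rule suminf_le) (use assms in \<open>auto intro!: summable_ignore_initial_segment summable_comparison_test[of _ M]\<close>)
  finally show ?thesis .
qed

lemma TD1:
  fixes T :: "nat \<Rightarrow> real^'d::finite \<Rightarrow> real"
  assumes S: "open S" "convex S"
    and diff: "\<And>k x. x \<in> S \<Longrightarrow> T k differentiable (at x)"
    and sm: "\<And>x. x \<in> S \<Longrightarrow> (\<lambda>k. T k x) sums G x"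
    and bd: "\<And>j. \<exists>M. summable M \<and> (\<forall>k. \<forall>x\<in>S. \<bar>pd j (T k) x\<bar> \<le> M k)"
    and x: "x \<in> S"
  shows "G differentiable (at x) \<and> (\<forall>i. (\<lambda>k. pd i (T k) x) sums pd i G x)"
proof -
  obtain M where M: "\<And>j. summable (M j)" "\<And>j k x. x \<in> S \<Longrightarrow> \<bar>pd j (T k) x\<bar> \<le> M j k"
    using bd by metis
  define MM where "MM k = (\<Sum>j\<in>UNIV. M j k)" for k
  have sMM: "summable MM" unfolding MM_def by (intro summable_sum M)
  have bMM: "\<bar>pd j (T k) y\<bar> \<le> MM k" if "y \<in> S" for j k y
  proof -
    have "\<bar>pd j (T k) y\<bar> \<le> M j k" using M(2)[OF that] .
    also have "\<dots> \<le> MM k" unfolding MM_def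
      by (rule member_le_sum) (use M(2)[OF that] in \<open>auto intro: order.trans[OF abs_ge_zero]\<close>)
    finally show ?thesis .
  qed
  define g' where "g' y h = (\<Sum>j\<in>UNIV. h $ j * (\<Sum>k. pd j (T k) y))" for y h
  have der: "(T k has_derivative (\<lambda>h. \<Sum>j\<in>UNIV. h $ j * pd j (T k) y)) (at y within S)" if "y \<in> S" for k y
    using has_derivative_partials[OF diff[OF that]] has_derivative_at_withinI by blast
  have unif: "\<forall>\<^sub>F n in sequentially. \<forall>y\<in>S. \<forall>h. norm ((\<Sum>k<n. \<Sum>j\<in>UNIV. h $ j * pd j (T k) y) - g' y h) \<le> e * norm h"
    if e: "e > 0" for e
  proof -
    define c where "c = real CARD('d)"
    have c: "c > 0" by (simp add: c_def)
    obtain N where N: "\<And>n. n \<ge> N \<Longrightarrow> norm (\<Sum>k. MM (k + n)) < e / c"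
      using suminf_exist_split[OF divide_pos_pos[OF e c] sMM] by blast
    show ?thesis unfolding eventually_sequentially
    proof (intro exI[of _ N] allI impI ballI)
      fix n y and h :: "real^'d" assume n: "N \<le> n" and y: "y \<in> S"
      have "(\<Sum>k<n. \<Sum>j\<in>UNIV. h $ j * pd j (T k) y) - g' y h =
          (\<Sum>j\<in>UNIV. h $ j * ((\<Sum>k<n. pd j (T k) y) - (\<Sum>k. pd j (T k) y)))"
        unfolding g'_def by (simp add: sum.swap[of _ "{..<_}"] sum_distrib_left right_diff_distrib sum_subtractf)
      also have "norm \<dots> \<le> (\<Sum>j\<in>(UNIV::'d set). norm h * (\<Sum>k. MM (k + n)))"
      proof -
        have "norm (\<Sum>j\<in>UNIV. h $ j * ((\<Sum>k<n. pd j (T k) y) - (\<Sum>k. pd j (T k) y))) \<le>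
            (\<Sum>j\<in>UNIV. \<bar>h $ j\<bar> * \<bar>(\<Sum>k. pd j (T k) y) - (\<Sum>k<n. pd j (T k) y)\<bar>)"
          by (rule order.trans[OF norm_sum]) (simp add: abs_mult abs_minus_commute)
        also have "\<dots> \<le> (\<Sum>j\<in>(UNIV::'d set). norm h * (\<Sum>k. MM (k + n)))"
        proof (intro sum_mono mult_mono)
          fix j
          show "\<bar>h $ j\<bar> \<le> norm h" by (rule component_le_norm_cart)
          show "\<bar>(\<Sum>k. pd j (T k) y) - (\<Sum>k<n. pd j (T k) y)\<bar> \<le> (\<Sum>k. MM (k + n))"
            by (rule tail_bound[OF sMM]) (rule bMM[OF y])
        qed auto
        finally show ?thesis .
      qed
      also have "\<dots> = c * norm h * (\<Sum>k. MM (k + n))" by (simp add: c_def)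
      also have "\<dots> \<le> c * norm h * (e / c)"
        using N[OF n] c by (intro mult_left_mono) auto
      also have "\<dots> = e * norm h" using c by simp
      finally show "norm ((\<Sum>k<n. \<Sum>j\<in>UNIV. h $ j * pd j (T k) y) - g' y h) \<le> e * norm h" .
    qed
  qed
  obtain g where g: "\<And>y. y \<in> S \<Longrightarrow> (\<lambda>n. T n y) sums g y \<and> (g has_derivative g' y) (at y within S)"
    using has_derivative_series[OF S(2) der unif x sm[OF x]] by blast
  have "(g has_derivative g' x) (at x)" using g[OF x] at_within_open[OF x S(1)] by simp
  then have dG: "(G has_derivative g' x) (at x)"
    by (rule has_derivative_transform_within_open[OF _ S(1) x]) (use g sm sums_unique2 in blast)
  show ?thesis
  proof (intro conjI allI)
    show "G differentiable (at x)" using dG by (auto simp: differentiable_def)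
    fix i
    have "pd i G x = g' x (axis i 1)" by (rule pd_has_derivative[OF dG])
    also have "\<dots> = (\<Sum>j\<in>UNIV. if j = i then (\<Sum>k. pd j (T k) x) else 0)"
      unfolding g'_def by (rule sum.cong) (auto simp: axis_def)
    also have "\<dots> = (\<Sum>k. pd i (T k) x)" by simp
    finally show "(\<lambda>k. pd i (T k) x) sums pd i G x"
      using summable_comparison_test[of "\<lambda>k. pd i (T k) x" MM] bMM[OF x] sMM
      by (simp add: summable_sums)
  qed
qed

lemma termdiff_all:
  fixes T :: "nat \<Rightarrow> real^'d::finite \<Rightarrow> real"
  assumes S: "open S" "convex S"
    and sm: "\<And>k. smooth_on S (T k)"
    and su: "\<And>x. x \<in> S \<Longrightarrow> (\<lambda>k. T k x) sums G x"
    and bd: "\<And>is. \<exists>M. summable M \<and> (\<forall>k. \<forall>x\<in>S. \<bar>pdl is (T k) x\<bar> \<le> M k)"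
  shows "\<forall>x\<in>S. (\<lambda>k. pdl is (T k) x) sums pdl is G x \<and> pdl is G differentiable (at x)"
proof (induction "is")
  case Nil
  show ?case
  proof
    fix x assume x: "x \<in> S"
    have "G differentiable (at x)"
    proof (rule conjunct1[OF TD1[OF S, of T G, OF _ su _ x]])
      fix k y assume "y \<in> S"
      then show "T k differentiable (at y)" using sm[of k] unfolding smooth_on_def
        by (metis pdl.simps(1))
    next
      fix j show "\<exists>M. summable M \<and> (\<forall>k. \<forall>x\<in>S. \<bar>pd j (T k) x\<bar> \<le> M k)"
        using bd[of "[j]"] by simp
    qed
    then show "(\<lambda>k. pdl [] (T k) x) sums pdl [] G x \<and> pdl [] G differentiable (at x)" using su x by simp
  qed
next
  case (Cons i "is")
  have s1: "(\<lambda>k. pdl (i # is) (T k) y) sums pdl (i # is) G y" if y: "y \<in> S" for y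
  proof -
    have "G' differentiable (at y) \<and> (\<forall>i. (\<lambda>k. pd i (pdl is (T k)) y) sums pd i G' y)" if "G' = pdl is G" for G'
      by (rule TD1[OF S]) (use sm Cons.IH that y bd[of "_ # is"] in \<open>auto simp: smooth_on_def\<close>)
    then show ?thesis by simp
  qed
  show ?case
  proof
    fix x assume x: "x \<in> S"
    have "pdl (i # is) G differentiable (at x)"
    proof (rule conjunct1[OF TD1[OF S, of "\<lambda>k. pdl (i # is) (T k)", OF _ s1 _ x]])
      fix k y assume "y \<in> S"
      then show "pdl (i # is) (T k) differentiable (at y)" using sm[of k] unfolding smooth_on_def
        by blast
    next
      fix j show "\<exists>M. summable M \<and> (\<forall>k. \<forall>x\<in>S. \<bar>pd j (pdl (i # is) (T k)) x\<bar> \<le> M k)"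
        using bd[of "j # i # is"] by simp
    qed auto
    then show "(\<lambda>k. pdl (i # is) (T k) x) sums pdl (i # is) G x \<and> pdl (i # is) G differentiable (at x)"
      using s1[OF x] by simp
  qed
qed

lemma pdl_append: "pdl (is @ js) g = pdl is (pdl js g)"
  by (induction "is") auto

lemma sums_abs_bound:
  fixes p q :: "nat \<Rightarrow> real"
  assumes "p sums s" "summable q" "\<And>k. \<bar>p k\<bar> \<le> q k"
  shows "\<bar>s\<bar> \<le> suminf q"
proof -
  have s: "s = suminf p" using assms(1) by (simp add: sums_iff)
  have sa: "summable (\<lambda>k. \<bar>p k\<bar>)" by (rule summable_comparison_test[of _ q]) (use assms in auto)
  have "\<bar>suminf p\<bar> \<le> (\<Sum>k. \<bar>p k\<bar>)" by (rule summable_rabs[OF sa])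
  also have "\<dots> \<le> suminf q" by (rule suminf_le) (use assms sa in auto)
  finally show ?thesis using s by simp
qed

lemma DB_aff:
  fixes \<gamma> :: "'d::finite \<Rightarrow> real"
  assumes S: "open S" "S \<subseteq> Opos" and L: "\<And>l. \<bar>\<gamma> l\<bar> + 2 \<le> L"
    and e: "e > 0" and small: "\<And>x. x \<in> S \<Longrightarrow> \<bar>a * mon \<gamma> x + d\<bar> \<le> e"
    and R: "\<And>x. x \<in> S \<Longrightarrow> \<bar>a * mon \<gamma> x\<bar> \<le> R"
    and Mx: "Mx \<ge> 1"
    and db: "\<And>x l. x \<in> S \<Longrightarrow> l \<in> Ls \<Longrightarrow> \<bar>a * coef [l] \<gamma> * mon (shiftc [l] \<gamma>) x\<bar> \<le> Mx"
    and A: "A \<ge> 4 * L * max 1 (R / e)"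
  shows "DB Ls S e (Mx / e) A (\<lambda>x. a * mon \<gamma> x + d)"
  unfolding DB_def
proof (intro conjI ballI)
  show "Bnd S e A (\<lambda>x. a * mon \<gamma> x + d)"
  proof (rule Bnd_aff[OF S _ e _ _ A])
    fix l show "\<bar>\<gamma> l\<bar> + 1 \<le> L" using L[of l] by linarith
  qed (use small R in auto)
  fix l assume l: "l \<in> Ls"
  have L2: "L \<ge> 2" using L[of l] by linarith
  have A2: "A \<ge> 4 * L * max 1 (Mx / Mx)"
    using A L2 by (smt (verit) Mx divide_self max.cobounded1 mult_left_mono)
  have "Bnd S Mx A (\<lambda>x. (a * coef [l] \<gamma>) * mon (shiftc [l] \<gamma>) x + 0)"
  proof (rule Bnd_aff[OF S _ _ _ _ A2])
    fix l' show "\<bar>shiftc [l] \<gamma> l'\<bar> + 1 \<le> L" using L[of l'] by (auto simp: shiftc_def)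
  qed (use Mx db l in auto)
  then have "Bnd S Mx A (pd l (\<lambda>x. a * mon \<gamma> x + d))"
  proof (rule Bnd_local[OF S(1), rotated])
    fix x assume "x \<in> S"
    then have "x \<in> Opos" using S by auto
    then show "a * coef [l] \<gamma> * mon (shiftc [l] \<gamma>) x + 0 = pd l (\<lambda>x. a * mon \<gamma> x + d) x"
      using pdl_aff[of "[l]" a \<gamma> d] by auto
  qed
  then show "Bnd S (e * (Mx / e)) A (pd l (\<lambda>x. a * mon \<gamma> x + d))" using e by simp
qed

lemma infinite_fun_nat: "infinite (UNIV :: ('n \<Rightarrow> nat) set)"
proof -
  have "inj (\<lambda>k::nat. (\<lambda>_::'n. k))"
  proof (rule injI)
    fix k1 k2 :: nat assume "(\<lambda>_::'n. k1) = (\<lambda>_. k2)"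
    then show "k1 = k2" by (simp add: fun_eq_iff)
  qed
  then have "infinite (range (\<lambda>k::nat. (\<lambda>_::'n. k)))" by (rule range_inj_infinite)
  then show ?thesis by (rule infinite_super[OF subset_UNIV])
qed

lemma enum_fun: "\<exists>g. bij_betw g (UNIV :: nat set) (UNIV :: ('n::finite \<Rightarrow> nat) set)"
  using bij_betw_from_nat_into[OF countableI_type infinite_fun_nat] by blast

lemma local_series:
  fixes x :: "real^'m::finite" and N :: "(real^'m) set"
    and a :: "'n::finite \<Rightarrow> real" and \<mu> :: "'n \<Rightarrow> 'm \<Rightarrow> real"
    and y :: "real^'n" and c :: "('n \<Rightarrow> nat) \<Rightarrow> real" and ft Fz :: "real^'m \<Rightarrow> real" and j :: 'n
    and Ls :: "'m set"
  assumes N: "open N" "convex N" "x \<in> N" "N \<subseteq> Opos"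
    and rho: "\<rho> > 0" "\<And>z l. z \<in> N \<Longrightarrow> \<rho> \<le> z $ l"
    and eps: "\<epsilon> > 0" and R0: "R0 \<ge> 1" and Mx: "Mx \<ge> 1"
    and close: "\<And>z i. z \<in> N \<Longrightarrow> \<bar>a i * mon (\<mu> i) z - y $ i\<bar> \<le> \<epsilon>"
    and bndb: "\<And>z i. z \<in> N \<Longrightarrow> \<bar>a i * mon (\<mu> i) z\<bar> \<le> R0"
    and ser: "\<And>z. z \<in> N \<Longrightarrow> ((\<lambda>\<alpha>. c \<alpha> * (\<Prod>i\<in>UNIV. (a i * mon (\<mu> i) z - y $ i) ^ \<alpha> i)) has_sum Fz z) UNIV"
    and ftd: "\<And>z. z \<in> N \<Longrightarrow> ft z = a j * mon (\<mu> j) z * Fz z"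
    and summ: "(\<lambda>\<alpha>. \<bar>c \<alpha>\<bar> * (16 * \<epsilon>) ^ sum \<alpha> UNIV) summable_on UNIV"
    and Sy: "infsum (\<lambda>\<alpha>. \<bar>c \<alpha>\<bar> * (16 * \<epsilon>) ^ sum \<alpha> UNIV) UNIV \<le> Sy"
    and dbnd: "\<And>z i l. z \<in> N \<Longrightarrow> l \<in> Ls \<Longrightarrow> \<bar>a i * coef [l] (\<mu> i) * mon (shiftc [l] (\<mu> i)) z\<bar> \<le> Mx"
    and L: "\<And>i l. \<bar>\<mu> i l\<bar> + 2 \<le> L"
    and A: "A \<ge> 4 * L * max 1 (R0 / \<epsilon>)"
  shows "pdl is ft differentiable (at x) \<and>
     \<bar>wt is x * pdl is ft x\<bar> \<le> (8 * R0 * 8 ^ CARD('n) * Sy) * A ^ length is * fact (length is) \<and>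
     (\<forall>l\<in>Ls. \<bar>wt is x * pdl (is @ [l]) ft x\<bar> \<le>
        (8 * R0 * 8 ^ CARD('n) * Sy * (Mx * (1/R0 + 1/\<epsilon>))) * A ^ length is * fact (length is))"
proof -
  have L2: "L \<ge> 2" using L[of undefined undefined] by linarith
  have A0: "A \<ge> 0" using A L2 by (smt (verit) max.cobounded1 mult_nonneg_nonneg)
  have A4L: "A \<ge> 4 * L * max 1 (R0 / R0)"
    using A L2 R0 by (smt (verit) divide_self max.cobounded1 max.orderE mult_left_mono)
  define u where "u i z = a i * mon (\<mu> i) z + - (y $ i)" for i z
  define Bj where "Bj z = a j * mon (\<mu> j) z + 0" for z
  have Du: "DB Ls N \<epsilon> (Mx / \<epsilon>) A (u i)" for i
    unfolding u_def[abs_def]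
    by (rule DB_aff[OF N(1,4) L eps _ bndb Mx dbnd A]) (use close in auto)
  have DBj: "DB Ls N R0 (Mx / R0) A Bj"
    unfolding Bj_def[abs_def]
    by (rule DB_aff[OF N(1,4) L _ _ bndb Mx dbnd A4L]) (use R0 bndb in auto)
  define E where "E \<alpha> = \<bar>c \<alpha>\<bar> * (8 * R0 * (\<Prod>i\<in>UNIV. 8 * (8 * \<epsilon>) ^ \<alpha> i))" for \<alpha> :: "'n \<Rightarrow> nat"
  define \<kappa> where "\<kappa> \<alpha> = Mx / R0 + (\<Sum>i\<in>UNIV. real (\<alpha> i) * (Mx / \<epsilon>))" for \<alpha> :: "'n \<Rightarrow> nat"
  define T where "T \<alpha> z = c \<alpha> * (Bj z * (\<Prod>i\<in>UNIV. u i z ^ \<alpha> i))" for \<alpha> :: "'n \<Rightarrow> nat" and z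
  have DT: "DB Ls N (E \<alpha>) (\<kappa> \<alpha>) A (T \<alpha>)" for \<alpha>
  proof -
    have P: "DB Ls N (\<Prod>i\<in>UNIV. 8 * (8 * \<epsilon>) ^ \<alpha> i) (\<Sum>i\<in>UNIV. real (\<alpha> i) * (Mx / \<epsilon>)) A
        (\<lambda>z. \<Prod>i\<in>UNIV. u i z ^ \<alpha> i)"
    proof (rule DB_prod[OF N(1) _ A0])
      fix i show "DB Ls N ((8 * \<epsilon>) ^ \<alpha> i) (real (\<alpha> i) * (Mx / \<epsilon>)) A (\<lambda>z. u i z ^ \<alpha> i)"
        by (rule DB_power[OF N(1) Du]) (use eps Mx A0 in auto)
    qed (use eps Mx in auto)
    have "DB Ls N (8 * R0 * (\<Prod>i\<in>UNIV. 8 * (8 * \<epsilon>) ^ \<alpha> i)) (Mx / R0 + (\<Sum>i\<in>UNIV. real (\<alpha> i) * (Mx / \<epsilon>))) A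
        (\<lambda>z. Bj z * (\<Prod>i\<in>UNIV. u i z ^ \<alpha> i))"
      by (rule DB_mult[OF N(1) DBj P]) (use eps Mx R0 A0 in \<open>auto intro!: prod_nonneg sum_nonneg\<close>)
    from DB_cmult[OF N(1) this, of "c \<alpha>"] show ?thesis
      unfolding E_def \<kappa>_def T_def[abs_def] by (simp add: mult.assoc)
  qed
  define w where "w \<alpha> = \<bar>c \<alpha>\<bar> * (16 * \<epsilon>) ^ sum \<alpha> UNIV" for \<alpha> :: "'n \<Rightarrow> nat"
  define K1 where "K1 = 8 * R0 * 8 ^ CARD('n)"
  have K1: "K1 \<ge> 0" using R0 by (simp add: K1_def)
  have Eeq: "E \<alpha> = K1 * (\<bar>c \<alpha>\<bar> * (8 * \<epsilon>) ^ sum \<alpha> UNIV)" for \<alpha>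
  proof -
    have "(\<Prod>i\<in>UNIV. 8 * (8 * \<epsilon>) ^ \<alpha> i) = 8 ^ CARD('n) * (8 * \<epsilon>) ^ sum \<alpha> UNIV"
      by (simp add: prod.distrib power_sum)
    then show ?thesis by (simp add: E_def K1_def mult_ac)
  qed
  have keq: "\<kappa> \<alpha> = Mx / R0 + real (sum \<alpha> UNIV) * (Mx / \<epsilon>)" for \<alpha>
    by (simp only: \<kappa>_def of_nat_sum sum_distrib_right)
  have E0: "E \<alpha> \<ge> 0" for \<alpha> using Eeq[of \<alpha>] K1 eps by simp
  have k0: "\<kappa> \<alpha> \<ge> 0" for \<alpha> unfolding keq using eps R0 Mx by (intro add_nonneg_nonneg mult_nonneg_nonneg divide_nonneg_nonneg) (auto intro!: sum_nonneg)
  have E_le: "E \<alpha> \<le> K1 * w \<alpha>" for \<alpha>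
    unfolding Eeq w_def using eps K1
    by (intro mult_left_mono power_mono) auto
  define K2 where "K2 = K1 * (Mx * (1 / R0 + 1 / \<epsilon>))"
  have Ek_le: "E \<alpha> * \<kappa> \<alpha> \<le> K2 * w \<alpha>" for \<alpha>
  proof -
    define n where "n = sum \<alpha> UNIV"
    have p1: "(8 * \<epsilon>) ^ n \<le> (16 * \<epsilon>) ^ n" using eps by (intro power_mono) auto
    have "real n \<le> 2 ^ n"
    proof (induction n)
      case (Suc n)
      have "(1::real) \<le> 2 ^ n" by simp
      moreover have "real (Suc n) = 1 + real n" "(2::real) ^ Suc n = 2 * 2 ^ n" by simp_all
      ultimately show ?case using Suc.IH by linarith
    qed simp
    then have "real n * (8 * \<epsilon>) ^ n \<le> 2 ^ n * (8 * \<epsilon>) ^ n"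
      by (rule mult_right_mono) (use eps in simp)
    also have "\<dots> = (2 * (8 * \<epsilon>)) ^ n" by (rule power_mult_distrib[symmetric])
    also have "\<dots> = (16 * \<epsilon>) ^ n" by simp
    finally have p2: "real n * (8 * \<epsilon>) ^ n \<le> (16 * \<epsilon>) ^ n" .
    have "E \<alpha> * \<kappa> \<alpha> = K1 * \<bar>c \<alpha>\<bar> * Mx * ((8 * \<epsilon>) ^ n * (1 / R0) + (real n * (8 * \<epsilon>) ^ n) * (1 / \<epsilon>))"
      by (simp add: Eeq keq n_def field_simps)
    also have "\<dots> \<le> K1 * \<bar>c \<alpha>\<bar> * Mx * ((16 * \<epsilon>) ^ n * (1 / R0) + (16 * \<epsilon>) ^ n * (1 / \<epsilon>))"
      using p1 p2 K1 Mx eps R0 by (intro mult_left_mono add_mono mult_right_mono) auto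
    also have "\<dots> = K2 * w \<alpha>" by (simp add: K2_def w_def n_def field_simps)
    finally show ?thesis .
  qed
  have K2: "K2 \<ge> 0" using K1 Mx eps R0 by (simp add: K2_def)
  have w0: "w \<alpha> \<ge> 0" for \<alpha> using eps by (simp add: w_def)
  have sw: "w summable_on UNIV" using summ by (simp add: w_def[abs_def])
  have iw: "infsum w UNIV \<le> Sy" using Sy by (simp add: w_def[abs_def])
  have sE: "E summable_on UNIV"
    by (rule summable_on_comparison_test[OF summable_on_cmult_right[OF sw, of K1]]) (use E_le E0 in auto)
  have sEk: "(\<lambda>\<alpha>. E \<alpha> * \<kappa> \<alpha>) summable_on UNIV"
    by (rule summable_on_comparison_test[OF summable_on_cmult_right[OF sw, of K2]]) (use Ek_le E0 k0 in auto)
  have iE: "infsum E UNIV \<le> K1 * Sy"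
  proof -
    have "infsum E UNIV \<le> infsum (\<lambda>\<alpha>. K1 * w \<alpha>) UNIV"
      by (rule infsum_mono[OF sE summable_on_cmult_right[OF sw]]) (rule E_le)
    also have "\<dots> = K1 * infsum w UNIV" by (rule infsum_cmult_right') 
    also have "\<dots> \<le> K1 * Sy" using iw K1 by (intro mult_left_mono) auto
    finally show ?thesis .
  qed
  have iEk: "infsum (\<lambda>\<alpha>. E \<alpha> * \<kappa> \<alpha>) UNIV \<le> K2 * Sy"
  proof -
    have "infsum (\<lambda>\<alpha>. E \<alpha> * \<kappa> \<alpha>) UNIV \<le> infsum (\<lambda>\<alpha>. K2 * w \<alpha>) UNIV"
      by (rule infsum_mono[OF sEk summable_on_cmult_right[OF sw]]) (rule Ek_le)
    also have "\<dots> = K2 * infsum w UNIV" by (rule infsum_cmult_right') 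
    also have "\<dots> \<le> K2 * Sy" using iw K2 by (intro mult_left_mono) auto
    finally show ?thesis .
  qed
  obtain g where g: "bij_betw g (UNIV :: nat set) (UNIV :: ('n \<Rightarrow> nat) set)" using enum_fun by blast
  have nat_sum: "summable (\<lambda>k. h (g k)) \<and> suminf (\<lambda>k. h (g k)) = infsum h UNIV"
    if "h summable_on UNIV" for h :: "('n \<Rightarrow> nat) \<Rightarrow> real"
  proof -
    have "(\<lambda>k. h (g k)) summable_on UNIV" using summable_on_reindex_bij_betw[OF g] that by blast
    then have "((\<lambda>k. h (g k)) has_sum infsum (\<lambda>k. h (g k)) UNIV) UNIV" by (rule has_sum_infsum)
    then have "(\<lambda>k. h (g k)) sums infsum h UNIV"
      using infsum_reindex_bij_betw[OF g, of h] by (simp add: has_sum_imp_sums)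
    then show ?thesis by (simp add: sums_iff)
  qed
  have sEg: "summable (\<lambda>k. E (g k))" "suminf (\<lambda>k. E (g k)) \<le> K1 * Sy"
    using nat_sum[OF sE] iE by auto
  have sEkg: "summable (\<lambda>k. E (g k) * \<kappa> (g k))" "suminf (\<lambda>k. E (g k) * \<kappa> (g k)) \<le> K2 * Sy"
    using nat_sum[OF sEk] iEk by auto
  have sums_ft: "(\<lambda>k. T (g k) z) sums ft z" if z: "z \<in> N" for z
  proof -
    have "((\<lambda>\<alpha>. Bj z * (c \<alpha> * (\<Prod>i\<in>UNIV. (a i * mon (\<mu> i) z - y $ i) ^ \<alpha> i))) has_sum (Bj z * Fz z)) UNIV"
      by (rule has_sum_cmult_right[OF ser[OF z]])
    moreover have "(\<lambda>\<alpha>. Bj z * (c \<alpha> * (\<Prod>i\<in>UNIV. (a i * mon (\<mu> i) z - y $ i) ^ \<alpha> i))) = (\<lambda>\<alpha>. T \<alpha> z)"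
      by (auto simp: T_def u_def mult_ac)
    moreover have "Bj z * Fz z = ft z" using ftd[OF z] by (simp add: Bj_def)
    ultimately have "((\<lambda>\<alpha>. T \<alpha> z) has_sum ft z) UNIV" by simp
    then have "((\<lambda>k. T (g k) z) has_sum ft z) UNIV"
      using has_sum_reindex_bij_betw[OF g, of "\<lambda>\<alpha>. T \<alpha> z" "ft z"] by simp
    then show ?thesis by (rule has_sum_imp_sums)
  qed
  have smT: "smooth_on N (T \<alpha>)" for \<alpha> using DT[of \<alpha>] by (auto simp: DB_def Bnd_def)
  define W0 where "W0 is = (\<Prod>l\<in>UNIV. \<rho> ^ count (mset is) l)" for "is" :: "'m list"
  have W0: "W0 is > 0" for "is" using rho by (auto simp: W0_def intro!: prod_pos)
  have wtW: "wt is z \<ge> W0 is" if "z \<in> N" for "is" z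
    unfolding wt_def W0_def using rho that by (intro prod_mono) (auto intro!: power_mono)
  define \<psi> where "\<psi> n = A ^ n * (fact n / (real n + 1)^2)" for n :: nat
  have \<psi>0: "\<psi> n \<ge> 0" for n using A0 by (simp add: \<psi>_def)
  have \<psi>le: "\<psi> n \<le> A ^ n * fact n" for n
    unfolding \<psi>_def using A0 by (intro mult_left_mono) (auto simp: divide_le_eq)
  have bndT: "\<bar>wt is z * pdl is (T \<alpha>) z\<bar> \<le> E \<alpha> * \<psi> (length is)" if "z \<in> N" for "is" \<alpha> z
    using DT[of \<alpha>] that by (auto simp: DB_def Bnd_def \<psi>_def mult.assoc)
  have bd: "\<exists>M. summable M \<and> (\<forall>k. \<forall>z\<in>N. \<bar>pdl is (T (g k)) z\<bar> \<le> M k)" for "is"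
  proof (intro exI conjI allI ballI)
    show "summable (\<lambda>k. E (g k) * \<psi> (length is) / W0 is)"
      by (intro summable_divide summable_mult2 sEg(1))
    fix k z assume z: "z \<in> N"
    have wp: "wt is z > 0" using wtW[OF z, of "is"] W0[of "is"] by linarith
    have "\<bar>pdl is (T (g k)) z\<bar> = \<bar>wt is z * pdl is (T (g k)) z\<bar> / wt is z"
      using wp by (simp add: abs_mult)
    also have "\<dots> \<le> E (g k) * \<psi> (length is) / wt is z"
      by (rule divide_right_mono[OF bndT[OF z]]) (use wp in auto)
    also have "\<dots> \<le> E (g k) * \<psi> (length is) / W0 is"
      by (rule divide_left_mono[OF wtW[OF z]]) (use E0 \<psi>0 W0 wp in auto)
    finally show "\<bar>pdl is (T (g k)) z\<bar> \<le> E (g k) * \<psi> (length is) / W0 is" .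
  qed
  have TD: "\<forall>z\<in>N. (\<lambda>k. pdl js (T (g k)) z) sums pdl js ft z \<and> pdl js ft differentiable (at z)" for js
    by (rule termdiff_all[OF N(1,2) smT sums_ft bd])
  show ?thesis
  proof (intro conjI ballI)
    show "pdl is ft differentiable (at x)" using TD[of "is"] N(3) by blast
    have "(\<lambda>k. wt is x * pdl is (T (g k)) x) sums (wt is x * pdl is ft x)"
      using TD[of "is"] N(3) by (intro sums_mult) blast
    then have "\<bar>wt is x * pdl is ft x\<bar> \<le> suminf (\<lambda>k. E (g k) * \<psi> (length is))"
      by (rule sums_abs_bound) (use sEg(1) bndT[OF N(3)] in \<open>auto intro: summable_mult2\<close>)
    also have "\<dots> = suminf (\<lambda>k. E (g k)) * \<psi> (length is)" by (rule suminf_mult2[symmetric, OF sEg(1)])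
    also have "\<dots> \<le> (K1 * Sy) * (A ^ length is * fact (length is))"
    proof (rule mult_mono[OF sEg(2) \<psi>le])
      have "0 \<le> suminf (\<lambda>k. E (g k))" by (intro suminf_nonneg sEg(1) E0)
      then show "0 \<le> K1 * Sy" using sEg(2) by linarith
    qed (use \<psi>0 in auto)
    finally show "\<bar>wt is x * pdl is ft x\<bar> \<le> (8 * R0 * 8 ^ CARD('n) * Sy) * A ^ length is * fact (length is)"
      by (simp add: K1_def mult_ac)
  next
    fix l assume l: "l \<in> Ls"
    have bndT2: "\<bar>wt is x * pdl (is @ [l]) (T \<alpha>) x\<bar> \<le> (E \<alpha> * \<kappa> \<alpha>) * \<psi> (length is)" for \<alpha>
      using DT[of \<alpha>] N(3) l by (auto simp: DB_def Bnd_def \<psi>_def mult.assoc pdl_append)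
    have "(\<lambda>k. wt is x * pdl (is @ [l]) (T (g k)) x) sums (wt is x * pdl (is @ [l]) ft x)"
      using TD[of "is @ [l]"] N(3) by (intro sums_mult) blast
    then have "\<bar>wt is x * pdl (is @ [l]) ft x\<bar> \<le> suminf (\<lambda>k. (E (g k) * \<kappa> (g k)) * \<psi> (length is))"
      by (rule sums_abs_bound) (use sEkg(1) bndT2 in \<open>auto intro: summable_mult2\<close>)
    also have "\<dots> = suminf (\<lambda>k. E (g k) * \<kappa> (g k)) * \<psi> (length is)" by (rule suminf_mult2[symmetric, OF sEkg(1)])
    also have "\<dots> \<le> (K2 * Sy) * (A ^ length is * fact (length is))"
    proof (rule mult_mono[OF sEkg(2) \<psi>le])
      have "0 \<le> suminf (\<lambda>k. E (g k) * \<kappa> (g k))" by (intro suminf_nonneg sEkg(1) mult_nonneg_nonneg E0 k0)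
      then show "0 \<le> K2 * Sy" using sEkg(2) by linarith
    qed (use \<psi>0 in auto)
    finally show "\<bar>wt is x * pdl (is @ [l]) ft x\<bar> \<le>
        (8 * R0 * 8 ^ CARD('n) * Sy * (Mx * (1/R0 + 1/\<epsilon>))) * A ^ length is * fact (length is)"
      by (simp add: K2_def K1_def mult_ac)
  qed
qed

lemma open_box_center:
  fixes y :: "real^'n::finite"
  shows "open {w::real^'n. \<forall>i. \<bar>w $ i - y $ i\<bar> < d}"
proof -
  have eq: "{w::real^'n. \<forall>i. \<bar>w $ i - y $ i\<bar> < d} = (\<Inter>i\<in>UNIV. {w. \<bar>w $ i - y $ i\<bar> < d})" by auto
  have o: "open {w::real^'n. \<bar>w $ i - y $ i\<bar> < d}" for i
    by (rule open_Collect_less) (intro continuous_intros)+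
  show ?thesis unfolding eq by (intro open_INT ballI o) simp
qed

lemma mon_continuous:
  fixes x :: "real^'d::finite"
  shows "x \<in> Opos \<Longrightarrow> isCont (\<lambda>z. a * mon \<gamma> z) x"
  by (intro continuous_intros differentiable_imp_continuous_within mono_differentiable)

lemma wm_intro:
  fixes g :: "real^'m::finite \<Rightarrow> real"
  assumes "\<And>x is. x \<in> W \<Longrightarrow> pdl is g differentiable (at x)" "W \<subseteq> Opos" "B > 0"
    and "\<And>x is. x \<in> W \<Longrightarrow> \<bar>wt is x * pdl is g x\<bar> \<le> B * A ^ length is * fact (length is)"
  shows "weakly_mild W A B 0 g"
  unfolding weakly_mild_def smooth_on_def
proof (intro conjI allI ballI)
  fix "is" and x assume x: "x \<in> W"
  show "pdl is g differentiable (at x)" by (rule assms(1)[OF x])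
  have wp: "wt is x > 0" using assms(2) x by (intro wt_nonneg) (auto simp: Opos_def)
  have "\<bar>pdl is g x\<bar> \<le> B * A ^ length is * fact (length is) / wt is x"
    using assms(4)[OF x, of "is"] wp by (simp add: pos_le_divide_eq abs_mult mult.commute)
  then show "\<bar>pdl is g x\<bar> \<le> B powr (0 + 1) * A ^ length is * fact (length is) powr (0 + 1) /
      (\<Prod>l\<in>UNIV. x $ l ^ count (mset is) l)"
    using assms(3) by (simp add: wt_def)
qed

theorem mainTheorem5:
  fixes T :: "(real^'k::finite) set"
    and U :: "((real^'k) \<times> (real^'m::finite)) set"
    and f :: "(real^'k) \<times> (real^'m) \<Rightarrow> real"
    and b :: "(real^'k) \<times> (real^'m) \<Rightarrow> real^'n::finite"
    and a :: "'n \<Rightarrow> real^'k \<Rightarrow> real"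
    and \<mu> :: "'n \<Rightarrow> 'm \<Rightarrow> real"
    and j :: 'n
    and F :: "real^'n \<Rightarrow> real"
    and V :: "(real^'n) set"
  assumes U_sub: "U \<subseteq> T \<times> unit_cube"
    and b_def: "\<And>t x i. (t, x) \<in> U \<Longrightarrow> b (t, x) $ i = a i t * (\<Prod>l\<in>UNIV. (x $ l) powr (\<mu> i l))"
    and b_bdd: "bounded (b ` U)"
    and V_open: "open V"
    and V_cl: "closure (b ` U) \<subseteq> V"
    and F_an: "real_analytic_on V F"
    and F_nz: "\<And>y. y \<in> V \<Longrightarrow> F y \<noteq> 0"
    and f_prep: "\<And>t x. (t, x) \<in> U \<Longrightarrow> f (t, x) = b (t, x) $ j * F (b (t, x))"
    and fib_open: "\<And>t. t \<in> T \<Longrightarrow> open (fiber U t)"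
  shows "(\<exists>A>0. \<exists>B>0. \<forall>t\<in>T. weakly_mild (fiber U t) A B 0 (\<lambda>x. f (t, x)))
    \<and> ((\<exists>M. \<forall>t\<in>T. \<forall>x\<in>fiber U t. \<forall>i.
            \<bar>b (t, x) $ i\<bar> \<le> M \<and> (\<forall>l. \<bar>pd l (\<lambda>y. b (t, y) $ i) x\<bar> \<le> M))
       \<longrightarrow> (\<exists>A>0. \<exists>B>0. \<forall>\<beta>::'m list. length \<beta> \<le> 1 \<longrightarrow>
              (\<forall>t\<in>T. weakly_mild (fiber U t) A B 0 (pdl \<beta> (\<lambda>x. f (t, x))))))"
proof -
  have fibO: "fiber U t \<subseteq> Opos" for t
    using U_sub by (auto simp: fiber_def unit_cube_def Opos_def)
  have bmon: "b (t, z) $ i = a i t * mon (\<mu> i) z" if "z \<in> fiber U t" for t z i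
    using b_def[of t z i] that by (simp add: fiber_def mon_def)
  obtain R where R: "\<And>w. w \<in> b ` U \<Longrightarrow> norm w \<le> R" using b_bdd by (auto simp: bounded_iff)
  define R0 where "R0 = max 1 R"
  have R0: "R0 \<ge> 1" by (simp add: R0_def)
  have bR0: "\<bar>b (t, z) $ i\<bar> \<le> R0" if "z \<in> fiber U t" for t z i
  proof -
    have "\<bar>b (t, z) $ i\<bar> \<le> norm (b (t, z))" by (rule component_le_norm_cart)
    also have "\<dots> \<le> R" using R[of "b (t, z)"] that by (auto simp: fiber_def)
    finally show ?thesis by (simp add: R0_def)
  qed
  define K where "K = closure (b ` U)"
  have Kc: "compact K" unfolding K_def compact_eq_bounded_closed using b_bdd by auto
  have KV: "K \<subseteq> V" using V_cl by (simp add: K_def)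
  have "\<forall>y\<in>V. \<exists>r. r > 0 \<and> (\<exists>c :: ('n \<Rightarrow> nat) \<Rightarrow> real. \<forall>z. (\<forall>i. \<bar>z $ i - y $ i\<bar> < r) \<longrightarrow>
       ((\<lambda>\<alpha>. c \<alpha> * (\<Prod>i\<in>UNIV. (z $ i - y $ i) ^ \<alpha> i)) has_sum F z) UNIV)"
    using F_an by (simp add: real_analytic_on_def)
  then obtain r where r0: "\<forall>y\<in>V. r y > 0 \<and> (\<exists>c :: ('n \<Rightarrow> nat) \<Rightarrow> real. \<forall>z. (\<forall>i. \<bar>z $ i - y $ i\<bar> < r y) \<longrightarrow>
       ((\<lambda>\<alpha>. c \<alpha> * (\<Prod>i\<in>UNIV. (z $ i - y $ i) ^ \<alpha> i)) has_sum F z) UNIV)"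
    by (rule bchoice[THEN exE]) blast
  then have r: "\<And>y. y \<in> V \<Longrightarrow> r y > 0" by blast
  from r0 have "\<forall>y\<in>V. \<exists>c :: ('n \<Rightarrow> nat) \<Rightarrow> real. \<forall>z. (\<forall>i. \<bar>z $ i - y $ i\<bar> < r y) \<longrightarrow>
       ((\<lambda>\<alpha>. c \<alpha> * (\<Prod>i\<in>UNIV. (z $ i - y $ i) ^ \<alpha> i)) has_sum F z) UNIV" by blast
  then obtain c where c0: "\<forall>y\<in>V. \<forall>z. (\<forall>i. \<bar>z $ i - y $ i\<bar> < r y) \<longrightarrow>
       ((\<lambda>\<alpha>. c y \<alpha> * (\<Prod>i\<in>UNIV. (z $ i - y $ i) ^ \<alpha> i)) has_sum F z) UNIV"
    by (rule bchoice[THEN exE]) blast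
  have c: "\<And>y z. y \<in> V \<Longrightarrow> (\<forall>i. \<bar>z $ i - y $ i\<bar> < r y) \<Longrightarrow>
       ((\<lambda>\<alpha>. c y \<alpha> * (\<Prod>i\<in>UNIV. (z $ i - y $ i) ^ \<alpha> i)) has_sum F z) UNIV"
    using c0 by blast
  define \<epsilon> where "\<epsilon> y = r y / 32" for y
  have eps: "\<epsilon> y > 0" if "y \<in> V" for y using r[OF that] by (simp add: \<epsilon>_def)
  define Q where "Q y = {w::real^'n. \<forall>i. \<bar>w $ i - y $ i\<bar> < \<epsilon> y / 2}" for y
  have "K \<subseteq> (\<Union>y\<in>K. Q y)"
  proof
    fix w assume "w \<in> K"
    then have "w \<in> Q w" using eps[of w] KV by (auto simp: Q_def)
    then show "w \<in> (\<Union>y\<in>K. Q y)" using \<open>w \<in> K\<close> by blast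
  qed
  moreover have "\<And>y. y \<in> K \<Longrightarrow> open (Q y)" unfolding Q_def by (rule open_box_center)
  ultimately obtain Y where Y: "Y \<subseteq> K" "finite Y" "K \<subseteq> (\<Union>y\<in>Y. Q y)"
    using compactE_image[OF Kc, of K Q] by blast
  have YV: "Y \<subseteq> V" using Y KV by auto
  define w where "w y \<alpha> = \<bar>c y \<alpha>\<bar> * (16 * \<epsilon> y) ^ sum \<alpha> UNIV" for y and \<alpha> :: "'n \<Rightarrow> nat"
  have sw: "w y summable_on UNIV" if y: "y \<in> V" for y
  proof -
    define z0 where "z0 = y + (\<chi> i. 16 * \<epsilon> y)"
    have "\<forall>i. \<bar>z0 $ i - y $ i\<bar> < r y" using eps[OF y] by (simp add: z0_def \<epsilon>_def)
    from c[OF y this] have "(\<lambda>\<alpha>. c y \<alpha> * (\<Prod>i\<in>UNIV. (z0 $ i - y $ i) ^ \<alpha> i)) summable_on UNIV"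
      by (rule has_sum_imp_summable)
    moreover have "(\<lambda>\<alpha>. c y \<alpha> * (\<Prod>i\<in>UNIV. (z0 $ i - y $ i) ^ \<alpha> i)) = (\<lambda>\<alpha>. c y \<alpha> * (16 * \<epsilon> y) ^ sum \<alpha> UNIV)"
      by (simp add: z0_def power_sum)
    ultimately have "(\<lambda>\<alpha>. norm (c y \<alpha> * (16 * \<epsilon> y) ^ sum \<alpha> UNIV)) summable_on UNIV"
      using summable_on_iff_abs_summable_on_real[of "\<lambda>\<alpha>. c y \<alpha> * (16 * \<epsilon> y) ^ sum \<alpha> UNIV" UNIV]
      by (simp del: real_norm_def power_mult_distrib)
    moreover have "(\<lambda>\<alpha>. norm (c y \<alpha> * (16 * \<epsilon> y) ^ sum \<alpha> UNIV)) = w y"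
      using eps[OF y] by (auto simp: w_def abs_mult)
    ultimately show ?thesis by simp
  qed
  define Ssum where "Ssum = (\<Sum>y\<in>Y. infsum (w y) UNIV)"
  have iw0: "infsum (w y) UNIV \<ge> 0" if "y \<in> V" for y
    by (rule infsum_nonneg) (use eps[OF that] in \<open>simp add: w_def\<close>)
  have Sy: "infsum (w y) UNIV \<le> 1 + Ssum" if "y \<in> Y" for y
  proof -
    have "infsum (w y) UNIV \<le> Ssum" unfolding Ssum_def
      by (rule member_le_sum) (use that Y(2) iw0 YV in auto)
    then show ?thesis by simp
  qed
  have Ss0: "Ssum \<ge> 0" unfolding Ssum_def using YV by (intro sum_nonneg iw0) auto
  define L where "L = 2 + (\<Sum>i\<in>UNIV. \<Sum>l\<in>UNIV. \<bar>\<mu> i l\<bar>)"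
  have L: "\<bar>\<mu> i l\<bar> + 2 \<le> L" for i l
  proof -
    have "\<bar>\<mu> i l\<bar> \<le> (\<Sum>l\<in>UNIV. \<bar>\<mu> i l\<bar>)" by (rule member_le_sum) auto
    also have "\<dots> \<le> (\<Sum>i\<in>UNIV. \<Sum>l\<in>UNIV. \<bar>\<mu> i l\<bar>)" by (rule member_le_sum) (auto intro: sum_nonneg)
    finally show ?thesis by (simp add: L_def)
  qed
  have L2: "L \<ge> 2" using L[of undefined undefined] by linarith
  define A where "A = 4 * L * (1 + (\<Sum>y\<in>Y. R0 / \<epsilon> y))"
  have sumR0: "(\<Sum>y\<in>Y. R0 / \<epsilon> y) \<ge> 0"
  proof (rule sum_nonneg)
    fix y assume "y \<in> Y"
    then have "\<epsilon> y > 0" using YV eps by auto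
    then show "0 \<le> R0 / \<epsilon> y" using R0 by simp
  qed
  have Apos: "A > 0" using L2 sumR0 by (simp add: A_def)
  have Ay: "A \<ge> 4 * L * max 1 (R0 / \<epsilon> y)" if "y \<in> Y" for y
  proof -
    have "R0 / \<epsilon> y \<le> (\<Sum>y\<in>Y. R0 / \<epsilon> y)"
    proof (rule member_le_sum)
      fix y' assume "y' \<in> Y - {y}"
      then have "\<epsilon> y' > 0" using YV eps by auto
      then show "0 \<le> R0 / \<epsilon> y'" using R0 by simp
    qed (use that Y(2) in auto)
    then have "max 1 (R0 / \<epsilon> y) \<le> 1 + (\<Sum>y\<in>Y. R0 / \<epsilon> y)" using sumR0 by auto
    then show ?thesis unfolding A_def using L2 by (intro mult_left_mono) auto
  qed
  define B1 where "B1 = 8 * R0 * 8 ^ CARD('n) * (1 + Ssum)"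
  have B1: "B1 > 0" using R0 Ss0 by (simp add: B1_def)
  have local: "pdl is (\<lambda>x. f (t, x)) differentiable (at x) \<and>
     \<bar>wt is x * pdl is (\<lambda>x. f (t, x)) x\<bar> \<le> B1 * A ^ length is * fact (length is) \<and>
     (\<forall>l\<in>Ls. \<bar>wt is x * pdl (is @ [l]) (\<lambda>x. f (t, x)) x\<bar> \<le>
        B1 * (Mx * (1/R0 + (\<Sum>y\<in>Y. 1 / \<epsilon> y))) * A ^ length is * fact (length is))"
    if t: "t \<in> T" and x: "x \<in> fiber U t" and Mx: "Mx \<ge> 1"
      and hyp: "\<And>z i l. z \<in> fiber U t \<Longrightarrow> l \<in> Ls \<Longrightarrow> \<bar>pd l (\<lambda>y. b (t, y) $ i) z\<bar> \<le> Mx"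
    for t x "is" Ls Mx
  proof -
    define W where "W = fiber U t"
    have Wo: "open W" using fib_open[OF t] by (simp add: W_def)
    have WO: "W \<subseteq> Opos" using fibO by (simp add: W_def)
    have xW: "x \<in> W" using x by (simp add: W_def)
    have "b (t, x) \<in> K" using x by (auto simp: K_def fiber_def intro: closure_subset[THEN subsetD])
    then obtain y where y: "y \<in> Y" "\<And>i. \<bar>b (t, x) $ i - y $ i\<bar> < \<epsilon> y / 2" using Y(3) by (auto simp: Q_def)
    have yV: "y \<in> V" using y YV by auto
    have ey: "\<epsilon> y > 0" using eps[OF yV] .
    define \<rho> where "\<rho> = Min (range (\<lambda>l. x $ l / 2))"
    have xpos: "\<And>l. x $ l > 0" using WO xW by (auto simp: Opos_def)
    have \<rho>: "\<rho> > 0" unfolding \<rho>_def using xpos by (subst Min_gr_iff) auto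
    have \<rho>le: "\<rho> \<le> x $ l / 2" for l unfolding \<rho>_def by (rule Min_le) auto
    have ev1: "\<forall>\<^sub>F z in nhds x. z \<in> W" using Wo xW by (rule eventually_nhds_in_open)
    have ev2: "\<forall>\<^sub>F z in nhds x. \<forall>l. \<rho> < z $ l"
    proof (rule eventually_all_finite)
      fix l
      have "((\<lambda>z::real^'m. z $ l) \<longlongrightarrow> x $ l) (nhds x)"
        by (intro tendsto_intros) (simp add: tendsto_ident_at filterlim_ident)
      moreover have "\<rho> < x $ l" using \<rho>le[of l] xpos[of l] by linarith
      ultimately show "\<forall>\<^sub>F z in nhds x. \<rho> < z $ l" by (rule order_tendstoD)
    qed
    have ev3: "\<forall>\<^sub>F z in nhds x. \<forall>i. \<bar>a i t * mon (\<mu> i) z - y $ i\<bar> < \<epsilon> y"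
    proof (rule eventually_all_finite)
      fix i
      have xO: "x \<in> Opos" using WO xW by auto
      have "((\<lambda>z. a i t * mon (\<mu> i) z) \<longlongrightarrow> a i t * mon (\<mu> i) x) (at x)"
        using mon_continuous[OF xO, of "a i t" "\<mu> i"] by (simp add: isCont_def)
      then have "((\<lambda>z. a i t * mon (\<mu> i) z) \<longlongrightarrow> a i t * mon (\<mu> i) x) (nhds x)"
        by (simp add: tendsto_nhds_iff)
      then have "\<forall>\<^sub>F z in nhds x. dist (a i t * mon (\<mu> i) z) (a i t * mon (\<mu> i) x) < \<epsilon> y / 2"
        using ey by (intro tendstoD) auto
      then show "\<forall>\<^sub>F z in nhds x. \<bar>a i t * mon (\<mu> i) z - y $ i\<bar> < \<epsilon> y"
      proof (rule eventually_mono)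
        fix z assume "dist (a i t * mon (\<mu> i) z) (a i t * mon (\<mu> i) x) < \<epsilon> y / 2"
        moreover have "\<bar>a i t * mon (\<mu> i) x - y $ i\<bar> < \<epsilon> y / 2" using y(2)[of i] bmon[OF x] by simp
        ultimately show "\<bar>a i t * mon (\<mu> i) z - y $ i\<bar> < \<epsilon> y" by (simp add: dist_real_def) (smt (verit))
      qed
    qed
    have "\<forall>\<^sub>F z in nhds x. z \<in> W \<and> (\<forall>l. \<rho> < z $ l) \<and> (\<forall>i. \<bar>a i t * mon (\<mu> i) z - y $ i\<bar> < \<epsilon> y)"
      using ev1 ev2 ev3 by eventually_elim auto
    then obtain \<delta> where \<delta>: "\<delta> > 0" "\<And>z. dist z x < \<delta> \<Longrightarrow>
        z \<in> W \<and> (\<forall>l. \<rho> < z $ l) \<and> (\<forall>i. \<bar>a i t * mon (\<mu> i) z - y $ i\<bar> < \<epsilon> y)"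
      unfolding eventually_nhds_metric by blast
    define N where "N = ball x \<delta>"
    have NW: "z \<in> W" and Nrho: "\<And>l. \<rho> \<le> z $ l" and Nclose: "\<And>i. \<bar>a i t * mon (\<mu> i) z - y $ i\<bar> < \<epsilon> y"
      if "z \<in> N" for z
      using \<delta>(2)[of z] that by (auto simp: N_def dist_commute less_imp_le)
    have main: "pdl is (\<lambda>x. f (t, x)) differentiable (at x) \<and>
     \<bar>wt is x * pdl is (\<lambda>x. f (t, x)) x\<bar> \<le> (8 * R0 * 8 ^ CARD('n) * infsum (w y) UNIV) * A ^ length is * fact (length is) \<and>
     (\<forall>l\<in>Ls. \<bar>wt is x * pdl (is @ [l]) (\<lambda>x. f (t, x)) x\<bar> \<le>
        (8 * R0 * 8 ^ CARD('n) * infsum (w y) UNIV * (Mx * (1/R0 + 1/\<epsilon> y))) * A ^ length is * fact (length is))"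
    proof (rule local_series[where N = N and \<rho> = \<rho> and a = "\<lambda>i. a i t" and \<mu> = \<mu> and y = y and c = "c y"
          and Fz = "\<lambda>z. F (b (t, z))" and j = j])
      show "open N" "convex N" "x \<in> N" using \<delta> by (auto simp: N_def)
      show "N \<subseteq> Opos" using NW WO by auto
      show "\<rho> > 0" by (rule \<rho>)
      show "\<And>z l. z \<in> N \<Longrightarrow> \<rho> \<le> z $ l" by (rule Nrho)
      show "\<epsilon> y > 0" "R0 \<ge> 1" "Mx \<ge> 1" by (fact ey, fact R0, fact Mx)
      show "\<And>z i. z \<in> N \<Longrightarrow> \<bar>a i t * mon (\<mu> i) z - y $ i\<bar> \<le> \<epsilon> y" using Nclose less_imp_le by blast
      show "\<And>z i. z \<in> N \<Longrightarrow> \<bar>a i t * mon (\<mu> i) z\<bar> \<le> R0"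
        using bR0 bmon NW unfolding W_def by metis
      show "((\<lambda>\<alpha>. c y \<alpha> * (\<Prod>i\<in>UNIV. (a i t * mon (\<mu> i) z - y $ i) ^ \<alpha> i)) has_sum F (b (t, z))) UNIV"
        if z: "z \<in> N" for z
      proof -
        have zW: "z \<in> fiber U t" using NW[OF z] by (simp add: W_def)
        have "\<forall>i. \<bar>b (t, z) $ i - y $ i\<bar> < r y"
          using Nclose[OF z] bmon[OF zW] eps[OF yV] by (auto simp: \<epsilon>_def) (smt (verit) r[OF yV])
        from c[OF yV this] show ?thesis using bmon[OF zW] by simp
      qed
      show "\<And>z. z \<in> N \<Longrightarrow> f (t, z) = a j t * mon (\<mu> j) z * F (b (t, z))"
        using f_prep bmon NW unfolding W_def fiber_def by (metis mem_Collect_eq)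
      show "(\<lambda>\<alpha>. \<bar>c y \<alpha>\<bar> * (16 * \<epsilon> y) ^ sum \<alpha> UNIV) summable_on UNIV"
        using sw[OF yV] by (simp add: w_def[abs_def])
      show "infsum (\<lambda>\<alpha>. \<bar>c y \<alpha>\<bar> * (16 * \<epsilon> y) ^ sum \<alpha> UNIV) UNIV \<le> infsum (w y) UNIV"
        by (simp add: w_def[abs_def])
      show "\<bar>a i t * coef [l] (\<mu> i) * mon (shiftc [l] (\<mu> i)) z\<bar> \<le> Mx" if z: "z \<in> N" and l: "l \<in> Ls" for z i l
      proof -
        have zW: "z \<in> W" using NW[OF z] .
        have zO: "z \<in> Opos" using zW WO by auto
        have "pd l (\<lambda>y. b (t, y) $ i) z = pd l (\<lambda>y. a i t * mon (\<mu> i) y + 0) z"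
          by (rule pd_local[OF Wo zW]) (use bmon in \<open>auto simp: W_def\<close>)
        also have "\<dots> = a i t * coef [l] (\<mu> i) * mon (shiftc [l] (\<mu> i)) z"
          using pdl_aff[of "[l]" "a i t" "\<mu> i" 0] zO by auto
        finally show ?thesis using hyp[of z l i] zW l by (simp add: W_def)
      qed
      show "\<And>i l. \<bar>\<mu> i l\<bar> + 2 \<le> L" by (rule L)
      show "A \<ge> 4 * L * max 1 (R0 / \<epsilon> y)" by (rule Ay[OF y(1)])
    qed
    have c1: "8 * R0 * 8 ^ CARD('n) * infsum (w y) UNIV \<le> B1"
      unfolding B1_def using Sy[OF y(1)] R0 by (intro mult_left_mono) auto
    have c2: "1 / \<epsilon> y \<le> (\<Sum>y\<in>Y. 1 / \<epsilon> y)"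
    proof (rule member_le_sum)
      fix y' assume "y' \<in> Y - {y}"
      then have "\<epsilon> y' > 0" using YV eps by auto
      then show "0 \<le> 1 / \<epsilon> y'" by simp
    qed (use y(1) Y(2) in auto)
    have c3: "8 * R0 * 8 ^ CARD('n) * infsum (w y) UNIV * (Mx * (1/R0 + 1/\<epsilon> y)) \<le>
        B1 * (Mx * (1/R0 + (\<Sum>y\<in>Y. 1 / \<epsilon> y)))"
      by (intro mult_mono c1 mult_left_mono add_left_mono c2) (use Mx R0 ey iw0[OF yV] B1 in auto)
    have An: "A ^ length is * fact (length is) \<ge> 0" using Apos by simp
    show ?thesis
    proof (intro conjI ballI)
      show "pdl is (\<lambda>x. f (t, x)) differentiable (at x)" using main by blast
      show "\<bar>wt is x * pdl is (\<lambda>x. f (t, x)) x\<bar> \<le> B1 * A ^ length is * fact (length is)"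
        using main mult_right_mono[OF c1 An] by (simp add: mult.assoc) 
      fix l assume l: "l \<in> Ls"
      have h1: "\<bar>wt is x * pdl (is @ [l]) (\<lambda>x. f (t, x)) x\<bar> \<le>
        (8 * R0 * 8 ^ CARD('n) * infsum (w y) UNIV * (Mx * (1/R0 + 1/\<epsilon> y))) * A ^ length is * fact (length is)"
        using main l by blast
      have h2: "(8 * R0 * 8 ^ CARD('n) * infsum (w y) UNIV * (Mx * (1/R0 + 1/\<epsilon> y))) * A ^ length is * fact (length is)
          \<le> B1 * (Mx * (1/R0 + (\<Sum>y\<in>Y. 1 / \<epsilon> y))) * A ^ length is * fact (length is)"
        using mult_right_mono[OF c3 An] by (simp only: mult.assoc)
      show "\<bar>wt is x * pdl (is @ [l]) (\<lambda>x. f (t, x)) x\<bar> \<le>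
        B1 * (Mx * (1/R0 + (\<Sum>y\<in>Y. 1 / \<epsilon> y))) * A ^ length is * fact (length is)"
        using h1 h2 by (rule order.trans)
    qed
  qed
  have part1: "\<exists>A>0. \<exists>B>0. \<forall>t\<in>T. weakly_mild (fiber U t) A B 0 (\<lambda>x. f (t, x))"
  proof -
   have "weakly_mild (fiber U t) A B1 0 (\<lambda>x. f (t, x))" if t: "t \<in> T" for t
   proof -
    have loc: "pdl is (\<lambda>x. f (t, x)) differentiable (at x) \<and>
        \<bar>wt is x * pdl is (\<lambda>x. f (t, x)) x\<bar> \<le> B1 * A ^ length is * fact (length is)"
      if "x \<in> fiber U t" for x "is"
      using local[OF t that, of 1 "{}" "is"] by simp
    show "weakly_mild (fiber U t) A B1 0 (\<lambda>x. f (t, x))"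
      by (rule wm_intro[OF _ fibO B1]) (use loc in auto)
   qed
   then show ?thesis using Apos B1 by blast
  qed
  have part2: "\<exists>A>0. \<exists>B>0. \<forall>\<beta>::'m list. length \<beta> \<le> 1 \<longrightarrow>
              (\<forall>t\<in>T. weakly_mild (fiber U t) A B 0 (pdl \<beta> (\<lambda>x. f (t, x))))"
    if hypM: "\<exists>M. \<forall>t\<in>T. \<forall>x\<in>fiber U t. \<forall>i.
            \<bar>b (t, x) $ i\<bar> \<le> M \<and> (\<forall>l. \<bar>pd l (\<lambda>y. b (t, y) $ i) x\<bar> \<le> M)"
  proof -
    obtain M where M: "\<And>t x i l. t \<in> T \<Longrightarrow> x \<in> fiber U t \<Longrightarrow> \<bar>pd l (\<lambda>y. b (t, y) $ i) x\<bar> \<le> M"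
      using hypM by blast
    define Mx where "Mx = max 1 M"
    have Mx: "Mx \<ge> 1" by (simp add: Mx_def)
    define C where "C = Mx * (1/R0 + (\<Sum>y\<in>Y. 1 / \<epsilon> y))"
    have C0: "C \<ge> 0"
    proof -
      have "(\<Sum>y\<in>Y. 1 / \<epsilon> y) \<ge> 0"
      proof (rule sum_nonneg)
        fix y assume "y \<in> Y"
        then have "\<epsilon> y > 0" using YV eps by auto
        then show "0 \<le> 1 / \<epsilon> y" by simp
      qed
      then show ?thesis using Mx R0 by (simp add: C_def)
    qed
    define B2 where "B2 = B1 * (1 + C)"
    have B2: "B2 > 0" using B1 C0 by (simp add: B2_def)
    have B12: "B1 \<le> B2" "B1 * C \<le> B2" using B1 C0 by (simp_all add: B2_def algebra_simps)
    have loc: "pdl is (\<lambda>x. f (t, x)) differentiable (at x) \<and>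
        \<bar>wt is x * pdl is (\<lambda>x. f (t, x)) x\<bar> \<le> B1 * A ^ length is * fact (length is) \<and>
        (\<forall>l. \<bar>wt is x * pdl (is @ [l]) (\<lambda>x. f (t, x)) x\<bar> \<le> (B1 * C) * A ^ length is * fact (length is))"
      if "t \<in> T" "x \<in> fiber U t" for t x "is"
    proof -
      have "\<And>z i l. z \<in> fiber U t \<Longrightarrow> l \<in> UNIV \<Longrightarrow> \<bar>pd l (\<lambda>y. b (t, y) $ i) z\<bar> \<le> Mx"
      proof -
        fix z i l assume "z \<in> fiber U t"
        then have "\<bar>pd l (\<lambda>y. b (t, y) $ i) z\<bar> \<le> M" using M[OF that(1)] by blast
        then show "\<bar>pd l (\<lambda>y. b (t, y) $ i) z\<bar> \<le> Mx" unfolding Mx_def by linarith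
      qed
      from local[OF that Mx this, of UNIV "is"] show ?thesis by (simp add: C_def)
    qed
    have An: "A ^ n * fact n \<ge> 0" for n using Apos by simp
    have "\<forall>\<beta>::'m list. length \<beta> \<le> 1 \<longrightarrow> (\<forall>t\<in>T. weakly_mild (fiber U t) A B2 0 (pdl \<beta> (\<lambda>x. f (t, x))))"
    proof (intro allI impI ballI)
      fix \<beta> :: "'m list" and t assume \<beta>: "length \<beta> \<le> 1" and t: "t \<in> T"
      show "weakly_mild (fiber U t) A B2 0 (pdl \<beta> (\<lambda>x. f (t, x)))"
      proof (cases \<beta>)
        case Nil
        show ?thesis unfolding Nil pdl.simps
        proof (rule wm_intro[OF _ fibO B2])
          fix x "is" assume x: "x \<in> fiber U t"
          show "pdl is (\<lambda>x. f (t, x)) differentiable (at x)" using loc[OF t x] by blast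
          show "\<bar>wt is x * pdl is (\<lambda>x. f (t, x)) x\<bar> \<le> B2 * A ^ length is * fact (length is)"
            using loc[OF t x, of "is"] mult_right_mono[OF B12(1) An[of "length is"]] by (simp add: mult.assoc)
        qed
      next
        case (Cons l rest)
        then have \<beta>l: "\<beta> = [l]" using \<beta> by auto
        have eq: "pdl is (pdl [l] g) = pdl (is @ [l]) g" for "is" and g :: "real^'m \<Rightarrow> real"
          by (simp add: pdl_append)
        have "weakly_mild (fiber U t) A B2 0 (pdl [l] (\<lambda>x. f (t, x)))"
        proof (rule wm_intro[OF _ fibO B2])
          fix x :: "real^'m" and "is" :: "'m list" assume x: "x \<in> fiber U t"
          show "pdl is (pdl [l] (\<lambda>x. f (t, x))) differentiable (at x)" unfolding eq using loc[OF t x] by blast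
          have "\<bar>wt is x * pdl (is @ [l]) (\<lambda>x. f (t, x)) x\<bar> \<le> (B1 * C) * A ^ length is * fact (length is)"
            using loc[OF t x, of "is"] by blast
          also have "\<dots> \<le> B2 * A ^ length is * fact (length is)"
            using mult_right_mono[OF B12(2) An[of "length is"]] by (simp add: mult.assoc)
          finally show "\<bar>wt is x * pdl is (pdl [l] (\<lambda>x. f (t, x))) x\<bar> \<le> B2 * A ^ length is * fact (length is)"
            unfolding eq .
        qed
        then show ?thesis using \<beta>l by simp
      qed
    qed
    then show ?thesis using Apos B2 by blast
  qed
  show ?thesis using part1 part2 by blast
qed

end
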